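(* Let $\mathcal B$ be a finite set of finite distributive double p-algebras and consider the corresponding set $\mathcal Y=\{H(\mathbf A^\flat)\mid \mathbf A\in\mathcal B\}$ of finite ordered sets. The following are equivalent: (1) the algebras in $\mathcal B$ are quasi-primal and share a common ternary discriminator term; (2) each $\mathbf A\in\mathcal B$ is simple; (3) each $\mathbf A\in\mathcal B$ is directly indecomposable and regular, that is, $\mathbf A$ satisfies $[a^*=b^*\ \&\ a^+=b^+]\Rightarrow a=b$; (4) each $\mathbb X\in\mathcal Y$ is connected and every element of $\mathbb X$ is either maximal or minimal.
   Context: A distributive double p-algebra is an algebra $\mathbf A=\langle A;\vee,\wedge,{}^*,{}^+,0,1\rangle$ such that $\mathbf A^\flat=\langle A;\vee,\wedge,0,1\rangle$ is a bounded distributive lattice and ${}^*,{}^+$ are unary operations with $x\wedge y=0\iff y\le x^*$ and $x\vee y=1\iff y\ge x^+$. For a finite bounded distributive lattice $\mathbf L$, $H(\mathbf L)$ is the ordered set of all bounded-lattice homomorphisms $\mathbf L\to\mathbf 2$ ordered pointwise (the Priestley dual of $\mathbf L$). The ternary discriminator on $A$ is $\tau(x,y,z)=x$ if $x\ne y$, $=z$ if $x=y$; a finite algebra is quasi-primal if $\tau$ is a term function; a family shares a common ternary discriminator term if one ternary term induces $\tau$ on every member. *)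

theory Defs
  imports Main
begin

text \<open>Algebras of type (2,2,1,1,0,0): join, meet, pseudocomplement, dual pseudocomplement, 0, 1,
  given on a carrier subset of an ambient type.\<close>
record 'a dpa =
  car :: "'a set"
  jn  :: "'a \<Rightarrow> 'a \<Rightarrow> 'a"
  mt  :: "'a \<Rightarrow> 'a \<Rightarrow> 'a"
  st  :: "'a \<Rightarrow> 'a"
  pl  :: "'a \<Rightarrow> 'a"
  bot :: "'a"
  top :: "'a"

definition alg_closed :: "'a dpa \<Rightarrow> bool" where
  "alg_closed A \<longleftrightarrow>
     (\<forall>x\<in>car A. \<forall>y\<in>car A. jn A x y \<in> car A \<and> mt A x y \<in> car A) \<and>
     (\<forall>x\<in>car A. st A x \<in> car A \<and> pl A x \<in> car A) \<and>
     bot A \<in> car A \<and> top A \<in> car A"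

definition leq :: "'a dpa \<Rightarrow> 'a \<Rightarrow> 'a \<Rightarrow> bool" where
  "leq A x y \<longleftrightarrow> mt A x y = x"

definition bdl :: "'a dpa \<Rightarrow> bool" where
  "bdl A \<longleftrightarrow> alg_closed A \<and>
     (\<forall>x\<in>car A. \<forall>y\<in>car A. jn A x y = jn A y x \<and> mt A x y = mt A y x) \<and>
     (\<forall>x\<in>car A. \<forall>y\<in>car A. \<forall>z\<in>car A.
        jn A (jn A x y) z = jn A x (jn A y z) \<and> mt A (mt A x y) z = mt A x (mt A y z)) \<and>
     (\<forall>x\<in>car A. \<forall>y\<in>car A. jn A x (mt A x y) = x \<and> mt A x (jn A x y) = x) \<and>
     (\<forall>x\<in>car A. \<forall>y\<in>car A. \<forall>z\<in>car A. mt A x (jn A y z) = jn A (mt A x y) (mt A x z)) \<and>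
     (\<forall>x\<in>car A. jn A x (bot A) = x \<and> mt A x (top A) = x)"

definition ddp_algebra :: "'a dpa \<Rightarrow> bool" where
  "ddp_algebra A \<longleftrightarrow> bdl A \<and>
     (\<forall>x\<in>car A. \<forall>y\<in>car A. mt A x y = bot A \<longleftrightarrow> leq A y (st A x)) \<and>
     (\<forall>x\<in>car A. \<forall>y\<in>car A. jn A x y = top A \<longleftrightarrow> leq A (pl A x) y)"

datatype tterm = VX | VY | VZ | TJn tterm tterm | TMt tterm tterm | TSt tterm | TPl tterm
  | TBot | TTop

fun teval :: "'a dpa \<Rightarrow> 'a \<Rightarrow> 'a \<Rightarrow> 'a \<Rightarrow> tterm \<Rightarrow> 'a" where
  "teval A x y z VX = x"
| "teval A x y z VY = y"
| "teval A x y z VZ = z"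
| "teval A x y z (TJn s t) = jn A (teval A x y z s) (teval A x y z t)"
| "teval A x y z (TMt s t) = mt A (teval A x y z s) (teval A x y z t)"
| "teval A x y z (TSt s) = st A (teval A x y z s)"
| "teval A x y z (TPl s) = pl A (teval A x y z s)"
| "teval A x y z TBot = bot A"
| "teval A x y z TTop = top A"

definition discr :: "'a \<Rightarrow> 'a \<Rightarrow> 'a \<Rightarrow> 'a" where
  "discr x y z = (if x \<noteq> y then x else z)"

definition is_discr_term :: "tterm \<Rightarrow> 'a dpa \<Rightarrow> bool" where
  "is_discr_term t A \<longleftrightarrow>
     (\<forall>x\<in>car A. \<forall>y\<in>car A. \<forall>z\<in>car A. teval A x y z t = discr x y z)"

definition quasi_primal :: "'a dpa \<Rightarrow> bool" where
  "quasi_primal A \<longleftrightarrow> finite (car A) \<and> (\<exists>t. is_discr_term t A)"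

definition congruence :: "'a dpa \<Rightarrow> ('a \<times> 'a) set \<Rightarrow> bool" where
  "congruence A \<theta> \<longleftrightarrow> equiv (car A) \<theta> \<and>
     (\<forall>x x' y y'. (x,x') \<in> \<theta> \<longrightarrow> (y,y') \<in> \<theta> \<longrightarrow>
        (jn A x y, jn A x' y') \<in> \<theta> \<and> (mt A x y, mt A x' y') \<in> \<theta>) \<and>
     (\<forall>x x'. (x,x') \<in> \<theta> \<longrightarrow> (st A x, st A x') \<in> \<theta> \<and> (pl A x, pl A x') \<in> \<theta>)"

definition simple :: "'a dpa \<Rightarrow> bool" where
  "simple A \<longleftrightarrow> {\<theta>. congruence A \<theta>} = {Id_on (car A), car A \<times> car A}"

definition prod_alg :: "'a dpa \<Rightarrow> 'b dpa \<Rightarrow> ('a \<times> 'b) dpa" where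
  "prod_alg B C =
     \<lparr> car = car B \<times> car C,
       jn = (\<lambda>(b,c) (b',c'). (jn B b b', jn C c c')),
       mt = (\<lambda>(b,c) (b',c'). (mt B b b', mt C c c')),
       st = (\<lambda>(b,c). (st B b, st C c)),
       pl = (\<lambda>(b,c). (pl B b, pl C c)),
       bot = (bot B, bot C),
       top = (top B, top C) \<rparr>"

definition is_hom :: "('a \<Rightarrow> 'b) \<Rightarrow> 'a dpa \<Rightarrow> 'b dpa \<Rightarrow> bool" where
  "is_hom f A B \<longleftrightarrow> f ` car A \<subseteq> car B \<and>
     (\<forall>x\<in>car A. \<forall>y\<in>car A. f (jn A x y) = jn B (f x) (f y) \<and> f (mt A x y) = mt B (f x) (f y)) \<and>
     (\<forall>x\<in>car A. f (st A x) = st B (f x) \<and> f (pl A x) = pl B (f x)) \<and>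
     f (bot A) = bot B \<and> f (top A) = top B"

definition is_iso :: "('a \<Rightarrow> 'b) \<Rightarrow> 'a dpa \<Rightarrow> 'b dpa \<Rightarrow> bool" where
  "is_iso f A B \<longleftrightarrow> is_hom f A B \<and> bij_betw f (car A) (car B)"

definition nontrivial :: "'a dpa \<Rightarrow> bool" where
  "nontrivial A \<longleftrightarrow> (\<exists>x\<in>car A. \<exists>y\<in>car A. x \<noteq> y)"

text \<open>The factors are taken on the same ambient
  type; this is no restriction since factors of A have at most |A| elements.\<close>
definition directly_indecomposable :: "'a dpa \<Rightarrow> bool" where
  "directly_indecomposable A \<longleftrightarrow>
     \<not> (\<exists>B C. \<exists>f :: 'a \<Rightarrow> 'a \<times> 'a. alg_closed B \<and> alg_closed C \<and> nontrivial B \<and> nontrivial C \<and>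
            is_iso f A (prod_alg B C))"

definition regular :: "'a dpa \<Rightarrow> bool" where
  "regular A \<longleftrightarrow> (\<forall>a\<in>car A. \<forall>b\<in>car A. st A a = st A b \<and> pl A a = pl A b \<longrightarrow> a = b)"

text \<open>Priestley dual H(L) of the bounded-lattice reduct: bounded-lattice homomorphisms into
  the two-element lattice (bool), made extensional (False outside the carrier), ordered
  pointwise.\<close>
definition H :: "'a dpa \<Rightarrow> ('a \<Rightarrow> bool) set" where
  "H A = {h. (\<forall>x\<in>car A. \<forall>y\<in>car A. h (jn A x y) = (h x \<or> h y) \<and> h (mt A x y) = (h x \<and> h y)) \<and>
              h (bot A) = False \<and> h (top A) = True \<and> (\<forall>x. x \<notin> car A \<longrightarrow> h x = False)}"

definition H_le :: "'a dpa \<Rightarrow> ('a \<Rightarrow> bool) \<Rightarrow> ('a \<Rightarrow> bool) \<Rightarrow> bool" where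
  "H_le A g h \<longleftrightarrow> (\<forall>x\<in>car A. g x \<longrightarrow> h x)"

definition poset_connected :: "'b set \<Rightarrow> ('b \<Rightarrow> 'b \<Rightarrow> bool) \<Rightarrow> bool" where
  "poset_connected X le \<longleftrightarrow>
     (\<forall>x\<in>X. \<forall>y\<in>X. (x, y) \<in> ({(u,v). u \<in> X \<and> v \<in> X \<and> (le u v \<or> le v u)})\<^sup>*)"

definition is_maximal :: "'b set \<Rightarrow> ('b \<Rightarrow> 'b \<Rightarrow> bool) \<Rightarrow> 'b \<Rightarrow> bool" where
  "is_maximal X le x \<longleftrightarrow> x \<in> X \<and> (\<forall>y\<in>X. le x y \<longrightarrow> y = x)"

definition is_minimal :: "'b set \<Rightarrow> ('b \<Rightarrow> 'b \<Rightarrow> bool) \<Rightarrow> 'b \<Rightarrow> bool" where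
  "is_minimal X le x \<longleftrightarrow> x \<in> X \<and> (\<forall>y\<in>X. le y x \<longrightarrow> y = x)"

end

theory Submission
  imports Defs
begin


definition po :: "'b set \<Rightarrow> ('b \<Rightarrow> 'b \<Rightarrow> bool) \<Rightarrow> bool" where
  "po X le \<longleftrightarrow> (\<forall>x\<in>X. le x x) \<and> (\<forall>x\<in>X. \<forall>y\<in>X. le x y \<longrightarrow> le y x \<longrightarrow> x = y)
     \<and> (\<forall>x\<in>X. \<forall>y\<in>X. \<forall>z\<in>X. le x y \<longrightarrow> le y z \<longrightarrow> le x z)"

definition dn :: "'b set \<Rightarrow> ('b \<Rightarrow> 'b \<Rightarrow> bool) \<Rightarrow> 'b set \<Rightarrow> 'b set" where
  "dn X le S = {g\<in>X. \<exists>s\<in>S. le g s}"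

abbreviation up :: "'b set \<Rightarrow> ('b \<Rightarrow> 'b \<Rightarrow> bool) \<Rightarrow> 'b set \<Rightarrow> 'b set" where
  "up X le S \<equiv> dn X (\<lambda>a b. le b a) S"

definition upcl :: "'b set \<Rightarrow> ('b \<Rightarrow> 'b \<Rightarrow> bool) \<Rightarrow> 'b set \<Rightarrow> bool" where
  "upcl X le S \<longleftrightarrow> S \<subseteq> X \<and> (\<forall>s\<in>S. \<forall>g\<in>X. le s g \<longrightarrow> g \<in> S)"

lemma po_dual: "po X le \<Longrightarrow> po X (\<lambda>a b. le b a)"
  unfolding po_def by blast

lemma dn_sub: "dn X le S \<subseteq> X" unfolding dn_def by blast

lemma dn_grow: "po X le \<Longrightarrow> S \<subseteq> X \<Longrightarrow> S \<subseteq> dn X le S"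
  unfolding po_def dn_def by blast

lemma dn_downcl: "po X le \<Longrightarrow> S \<subseteq> X \<Longrightarrow> upcl X (\<lambda>a b. le b a) (dn X le S)"
  unfolding po_def dn_def upcl_def by blast

lemma compl_upcl: "upcl X le S \<Longrightarrow> upcl X (\<lambda>a b. le b a) (X - S)"
  unfolding upcl_def by blast

lemma dn_Un: "dn X le (S \<union> T) = dn X le S \<union> dn X le T"
  unfolding dn_def by blast

lemma dn_empty[simp]: "dn X le {} = {}" unfolding dn_def by blast

lemma F1g:
  assumes po: "po X le" and V: "upcl X le V" and P: "upcl X (\<lambda>a b. le b a) P"
  shows "((X - P) \<inter> (X - dn X le (X - dn X le V)) = {}) \<longleftrightarrow> dn X le V \<subseteq> P"
proof
  assume L: "(X - P) \<inter> (X - dn X le (X - dn X le V)) = {}"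
  show "dn X le V \<subseteq> P"
  proof
    fix h assume h: "h \<in> dn X le V"
    then obtain g where g: "g \<in> V" "le h g" "h \<in> X" unfolding dn_def by blast
    have gX: "g \<in> X" using g V unfolding upcl_def by blast
    show "h \<in> P"
    proof (rule ccontr)
      assume "h \<notin> P"
      hence gP: "g \<notin> P" using P g gX unfolding upcl_def by blast
      have "g \<notin> dn X le (X - dn X le V)"
      proof
        assume "g \<in> dn X le (X - dn X le V)"
        then obtain k where k: "k \<in> X" "k \<notin> dn X le V" "le g k" unfolding dn_def by blast
        hence "k \<in> V" using V g unfolding upcl_def by blast
        hence "k \<in> dn X le V" using k po unfolding dn_def po_def by blast
        thus False using k by blast
      qed
      thus False using L gP gX by blast
    qed
  qed
next
  assume R: "dn X le V \<subseteq> P"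
  show "(X - P) \<inter> (X - dn X le (X - dn X le V)) = {}"
  proof (rule ccontr)
    assume "\<not> ?thesis"
    then obtain q where q: "q \<in> X" "q \<notin> P" "q \<notin> dn X le (X - dn X le V)" by blast
    have "q \<notin> dn X le V" using q R by blast
    hence "q \<in> dn X le (X - dn X le V)" using q po unfolding dn_def po_def by blast
    thus False using q by blast
  qed
qed

lemma G1g:
  assumes po: "po X le" and U: "upcl X le U" and W: "upcl X le W"
    and eq: "U - {h} = W - {h}" and g: "g \<in> X" "le h g" "g \<noteq> h" and h: "h \<in> X"
  shows "dn X le U = dn X le W"
proof -
  have *: "dn X le U \<subseteq> dn X le W" if U: "upcl X le U" and W: "upcl X le W"
    and eq: "U - {h} = W - {h}" for U W
  proof
    fix k assume "k \<in> dn X le U"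
    then obtain a where a: "a \<in> U" "le k a" "k \<in> X" unfolding dn_def by blast
    show "k \<in> dn X le W"
    proof (cases "a = h")
      case True
      have "g \<in> U" using U a True g unfolding upcl_def by blast
      hence "g \<in> W" using eq g by blast
      moreover have "le k g" using po a True g h unfolding po_def by blast
      ultimately show ?thesis using a unfolding dn_def by blast
    next
      case False
      hence "a \<in> W" using eq a by blast
      thus ?thesis using a unfolding dn_def by blast
    qed
  qed
  show ?thesis using *[OF U W eq] *[OF W U eq[symmetric]] by blast
qed

definition ud :: "'b set \<Rightarrow> ('b \<Rightarrow> 'b \<Rightarrow> bool) \<Rightarrow> 'b set \<Rightarrow> 'b set" where
  "ud X le K = dn X le (up X le K)"

lemma conn_closed:
  assumes c: "poset_connected X le" and K: "K \<subseteq> X" "k \<in> K"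
    and cl1: "\<forall>a\<in>K. \<forall>g\<in>X. le a g \<longrightarrow> g \<in> K" and cl2: "\<forall>a\<in>K. \<forall>g\<in>X. le g a \<longrightarrow> g \<in> K"
  shows "K = X"
proof
  show "X \<subseteq> K"
  proof
    fix x assume x: "x \<in> X"
    have "(k, x) \<in> ({(u,v). u \<in> X \<and> v \<in> X \<and> (le u v \<or> le v u)})\<^sup>*"
      using c K x unfolding poset_connected_def by blast
    thus "x \<in> K"
    proof (induction rule: rtrancl_induct)
      case base thus ?case using K by blast
    next
      case (step y z) thus ?case using cl1 cl2 by blast
    qed
  qed
qed (use K in blast)

lemma ud_iter:
  assumes po: "po X le" and c: "poset_connected X le" and fin: "finite X"
    and K: "K \<subseteq> X" "K \<noteq> {}"
  shows "K \<subseteq> (ud X le ^^ n) K \<and> (ud X le ^^ n) K \<subseteq> X \<and> ((ud X le ^^ n) K = X \<or> n < card ((ud X le ^^ n) K))"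
proof (induction n)
  case 0
  have "finite K" using finite_subset[OF K(1) fin] .
  hence "0 < card K" using K(2) by (simp add: card_gt_0_iff)
  then show ?case using K by simp
next
  case (Suc n)
  define K' where "K' = (ud X le ^^ n) K"
  have eq: "(ud X le ^^ Suc n) K = ud X le K'" unfolding K'_def by simp
  have IH: "K \<subseteq> K'" "K' \<subseteq> X" "K' = X \<or> n < card K'" using Suc.IH unfolding K'_def by blast+
  have sub: "ud X le K' \<subseteq> X" unfolding ud_def by (rule dn_sub)
  have grow: "K' \<subseteq> ud X le K'"
  proof -
    have "K' \<subseteq> up X le K'" using dn_grow[OF po_dual[OF po] IH(2)] by simp
    also have "\<dots> \<subseteq> ud X le K'" unfolding ud_def by (rule dn_grow[OF po dn_sub])
    finally show ?thesis .
  qed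
  have "ud X le K' = X \<or> Suc n < card (ud X le K')"
  proof (cases "ud X le K' = K'")
    case True
    have up1: "up X le K' \<subseteq> K'"
    proof -
      have "up X le K' \<subseteq> ud X le K'" unfolding ud_def by (rule dn_grow[OF po dn_sub])
      thus ?thesis using True by simp
    qed
    have cl1: "\<forall>a\<in>K'. \<forall>g\<in>X. le a g \<longrightarrow> g \<in> K'"
    proof (intro ballI impI)
      fix a g assume "a \<in> K'" "g \<in> X" "le a g"
      hence "g \<in> up X le K'" unfolding dn_def by blast
      thus "g \<in> K'" using up1 by blast
    qed
    have cl2: "\<forall>a\<in>K'. \<forall>g\<in>X. le g a \<longrightarrow> g \<in> K'"
    proof (intro ballI impI)
      fix a g assume a: "a \<in> K'" "g \<in> X" "le g a"
      have "a \<in> up X le K'" using a(1) dn_grow[OF po_dual[OF po] IH(2)] by blast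
      hence "g \<in> ud X le K'" using a unfolding ud_def dn_def by blast
      thus "g \<in> K'" using True by simp
    qed
    obtain k where "k \<in> K'" using IH(1) K(2) by blast
    have "K' = X" using conn_closed[OF c IH(2) \<open>k \<in> K'\<close> cl1 cl2] .
    thus ?thesis using True by simp
  next
    case False
    show ?thesis
    proof (cases "K' = X")
      case True thus ?thesis using sub grow by (simp add: subset_antisym)
    next
      case F2: False
      have "K' \<subset> ud X le K'" using grow False by (simp add: psubset_eq)
      hence "card K' < card (ud X le K')" by (rule psubset_card_mono[OF finite_subset[OF sub fin]])
      thus ?thesis using IH(3) F2 by simp
    qed
  qed
  hence "K \<subseteq> ud X le K' \<and> ud X le K' \<subseteq> X \<and> (ud X le K' = X \<or> Suc n < card (ud X le K'))"
    using subset_trans[OF IH(1) grow] sub by simp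
  thus ?case unfolding eq .
qed

lemma ud_full:
  assumes po: "po X le" and c: "poset_connected X le" and fin: "finite X"
    and K: "K \<subseteq> X" "K \<noteq> {}" and n: "card X \<le> n"
  shows "(ud X le ^^ n) K = X"
proof -
  have *: "(ud X le ^^ n) K \<subseteq> X" "(ud X le ^^ n) K = X \<or> n < card ((ud X le ^^ n) K)"
    using ud_iter[OF po c fin K] by auto
  have "card ((ud X le ^^ n) K) \<le> card X" using card_mono[OF fin *(1)] .
  thus ?thesis using * n by linarith
qed

lemma ud_empty: "(ud X le ^^ n) {} = {}"
  by (induction n) (auto simp: ud_def)



locale fdda =
  fixes A :: "'a dpa"
  assumes ddp: "ddp_algebra A" and fin: "finite (car A)"
begin

lemma bdl: "bdl A" using ddp unfolding ddp_algebra_def by blast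

lemma cl: "alg_closed A" using bdl unfolding bdl_def by blast

lemma jn_cl[simp]: "x \<in> car A \<Longrightarrow> y \<in> car A \<Longrightarrow> jn A x y \<in> car A"
  and mt_cl[simp]: "x \<in> car A \<Longrightarrow> y \<in> car A \<Longrightarrow> mt A x y \<in> car A"
  and st_cl[simp]: "x \<in> car A \<Longrightarrow> st A x \<in> car A"
  and pl_cl[simp]: "x \<in> car A \<Longrightarrow> pl A x \<in> car A"
  and bot_cl[simp]: "bot A \<in> car A"
  and top_cl[simp]: "top A \<in> car A"
  using cl unfolding alg_closed_def by auto

lemma jn_comm: "x \<in> car A \<Longrightarrow> y \<in> car A \<Longrightarrow> jn A x y = jn A y x"
  and mt_comm: "x \<in> car A \<Longrightarrow> y \<in> car A \<Longrightarrow> mt A x y = mt A y x"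
  and mt_assoc: "x \<in> car A \<Longrightarrow> y \<in> car A \<Longrightarrow> z \<in> car A \<Longrightarrow> mt A (mt A x y) z = mt A x (mt A y z)"
  and absorb1: "x \<in> car A \<Longrightarrow> y \<in> car A \<Longrightarrow> jn A x (mt A x y) = x"
  and absorb2: "x \<in> car A \<Longrightarrow> y \<in> car A \<Longrightarrow> mt A x (jn A x y) = x"
  and distr: "x \<in> car A \<Longrightarrow> y \<in> car A \<Longrightarrow> z \<in> car A \<Longrightarrow> mt A x (jn A y z) = jn A (mt A x y) (mt A x z)"
  and jn_bot: "x \<in> car A \<Longrightarrow> jn A x (bot A) = x"
  and mt_top: "x \<in> car A \<Longrightarrow> mt A x (top A) = x"
  using bdl unfolding bdl_def by auto

lemma st_ax: "x \<in> car A \<Longrightarrow> y \<in> car A \<Longrightarrow> mt A x y = bot A \<longleftrightarrow> leq A y (st A x)"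
  and pl_ax: "x \<in> car A \<Longrightarrow> y \<in> car A \<Longrightarrow> jn A x y = top A \<longleftrightarrow> leq A (pl A x) y"
  using ddp unfolding ddp_algebra_def by auto

lemma mt_idem: "x \<in> car A \<Longrightarrow> mt A x x = x"
  by (metis absorb1 absorb2 mt_cl)

lemma leq_refl: "x \<in> car A \<Longrightarrow> leq A x x" unfolding leq_def by (rule mt_idem)

lemma leq_antisym: "x \<in> car A \<Longrightarrow> y \<in> car A \<Longrightarrow> leq A x y \<Longrightarrow> leq A y x \<Longrightarrow> x = y"
  unfolding leq_def by (metis mt_comm)

lemma leq_trans: "x \<in> car A \<Longrightarrow> y \<in> car A \<Longrightarrow> z \<in> car A \<Longrightarrow> leq A x y \<Longrightarrow> leq A y z \<Longrightarrow> leq A x z"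
  unfolding leq_def by (metis mt_assoc)

lemma leq_mt1: "x \<in> car A \<Longrightarrow> y \<in> car A \<Longrightarrow> leq A (mt A x y) x"
  unfolding leq_def by (metis mt_assoc mt_comm mt_idem)

lemma leq_mt2: "x \<in> car A \<Longrightarrow> y \<in> car A \<Longrightarrow> leq A (mt A x y) y"
  unfolding leq_def by (metis mt_assoc mt_idem)

lemma leq_glb: "x \<in> car A \<Longrightarrow> y \<in> car A \<Longrightarrow> z \<in> car A \<Longrightarrow> leq A z x \<Longrightarrow> leq A z y \<Longrightarrow> leq A z (mt A x y)"
  unfolding leq_def by (metis mt_assoc)

lemma leq_jn1: "x \<in> car A \<Longrightarrow> y \<in> car A \<Longrightarrow> leq A x (jn A x y)"
  unfolding leq_def by (rule absorb2)

lemma leq_jn2: "x \<in> car A \<Longrightarrow> y \<in> car A \<Longrightarrow> leq A y (jn A x y)"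
  unfolding leq_def by (metis absorb2 jn_comm)

lemma leq_lub: "x \<in> car A \<Longrightarrow> y \<in> car A \<Longrightarrow> z \<in> car A \<Longrightarrow> leq A x z \<Longrightarrow> leq A y z \<Longrightarrow> leq A (jn A x y) z"
  unfolding leq_def by (metis distr jn_cl mt_comm)

lemma leq_bot: "x \<in> car A \<Longrightarrow> leq A (bot A) x"
  unfolding leq_def by (metis absorb2 bot_cl jn_bot jn_comm)

lemma leq_top: "x \<in> car A \<Longrightarrow> leq A x (top A)"
  unfolding leq_def by (rule mt_top)

lemma H_mono: "h \<in> H A \<Longrightarrow> x \<in> car A \<Longrightarrow> y \<in> car A \<Longrightarrow> leq A x y \<Longrightarrow> h x \<Longrightarrow> h y"
  unfolding H_def leq_def by (metis (mono_tags, lifting) mem_Collect_eq)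

lemma H_jn: "h \<in> H A \<Longrightarrow> x \<in> car A \<Longrightarrow> y \<in> car A \<Longrightarrow> h (jn A x y) = (h x \<or> h y)"
  and H_mt: "h \<in> H A \<Longrightarrow> x \<in> car A \<Longrightarrow> y \<in> car A \<Longrightarrow> h (mt A x y) = (h x \<and> h y)"
  and H_bot: "h \<in> H A \<Longrightarrow> \<not> h (bot A)"
  and H_top: "h \<in> H A \<Longrightarrow> h (top A)"
  and H_out: "h \<in> H A \<Longrightarrow> x \<notin> car A \<Longrightarrow> \<not> h x"
  unfolding H_def by auto

lemma separation:
  assumes x: "x \<in> car A" and y: "y \<in> car A" and nl: "\<not> leq A x y"
  shows "\<exists>h\<in>H A. h x \<and> \<not> h y"
proof -
  define S where "S = {z\<in>car A. leq A z x \<and> \<not> leq A z y}"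
  define \<mu> where "\<mu> z = card {w\<in>car A. leq A w z}" for z
  have "x \<in> S" using x nl leq_refl unfolding S_def by blast
  then obtain j where jS: "j \<in> S" and jmin: "\<And>z. z \<in> S \<Longrightarrow> \<mu> j \<le> \<mu> z"
    using ex_has_least_nat[of "\<lambda>z. z \<in> S" x \<mu>] by blast
  have j: "j \<in> car A" "leq A j x" "\<not> leq A j y" using jS unfolding S_def by auto
  have below: "leq A z y" if z: "z \<in> car A" "leq A z j" "z \<noteq> j" for z
  proof (rule ccontr)
    assume nz: "\<not> leq A z y"
    have "leq A z x" using leq_trans[OF z(1) j(1) x z(2) j(2)] .
    hence "z \<in> S" using z nz unfolding S_def by blast
    hence le: "\<mu> j \<le> \<mu> z" using jmin by blast
    have sub: "{w\<in>car A. leq A w z} \<subseteq> {w\<in>car A. leq A w j}"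
    proof
      fix w assume "w \<in> {w\<in>car A. leq A w z}"
      thus "w \<in> {w\<in>car A. leq A w j}" using leq_trans[OF _ z(1) j(1) _ z(2)] by blast
    qed
    have "j \<notin> {w\<in>car A. leq A w z}" using leq_antisym[OF z(1) j(1) z(2)] z(3) by blast
    moreover have "j \<in> {w\<in>car A. leq A w j}" using j leq_refl by blast
    ultimately have "{w\<in>car A. leq A w z} \<subset> {w\<in>car A. leq A w j}" using sub by blast
    hence "\<mu> z < \<mu> j" unfolding \<mu>_def by (rule psubset_card_mono[rotated]) (use fin in simp)
    thus False using le by simp
  qed
  have prime: "leq A j a \<or> leq A j b" if ab: "a \<in> car A" "b \<in> car A" "leq A j (jn A a b)" for a b
  proof (rule ccontr)
    assume n: "\<not> (leq A j a \<or> leq A j b)"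
    have ja1: "mt A j a \<noteq> j" using n unfolding leq_def by blast
    have jb1: "mt A j b \<noteq> j" using n unfolding leq_def by blast
    have ja: "leq A (mt A j a) y"
      using below[OF mt_cl[OF j(1) ab(1)] leq_mt1[OF j(1) ab(1)] ja1] .
    have jb: "leq A (mt A j b) y"
      using below[OF mt_cl[OF j(1) ab(2)] leq_mt1[OF j(1) ab(2)] jb1] .
    have "j = mt A j (jn A a b)" using ab(3) unfolding leq_def by simp
    also have "\<dots> = jn A (mt A j a) (mt A j b)" using distr[OF j(1) ab(1) ab(2)] .
    finally have jj: "j = jn A (mt A j a) (mt A j b)" .
    have "leq A j y" using leq_lub[OF mt_cl[OF j(1) ab(1)] mt_cl[OF j(1) ab(2)] y ja jb] jj by simp
    thus False using j by blast
  qed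
  define h where "h w = (w \<in> car A \<and> leq A j w)" for w
  have hj: "h (jn A a b) = (h a \<or> h b)" if ab: "a \<in> car A" "b \<in> car A" for a b
  proof
    assume "h (jn A a b)" thus "h a \<or> h b" using prime[OF ab] ab unfolding h_def by blast
  next
    assume "h a \<or> h b"
    thus "h (jn A a b)" unfolding h_def
      using leq_trans[OF j(1) ab(1) jn_cl[OF ab] _ leq_jn1[OF ab]]
        leq_trans[OF j(1) ab(2) jn_cl[OF ab] _ leq_jn2[OF ab]] ab by auto
  qed
  have hm: "h (mt A a b) = (h a \<and> h b)" if ab: "a \<in> car A" "b \<in> car A" for a b
  proof
    assume "h (mt A a b)" thus "h a \<and> h b" unfolding h_def
      using leq_trans[OF j(1) mt_cl[OF ab] ab(1) _ leq_mt1[OF ab]]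
        leq_trans[OF j(1) mt_cl[OF ab] ab(2) _ leq_mt2[OF ab]] ab by auto
  next
    assume "h a \<and> h b" thus "h (mt A a b)" unfolding h_def using leq_glb[OF ab j(1)] ab by auto
  qed
  have hb: "\<not> h (bot A)"
  proof
    assume "h (bot A)"
    hence "j = bot A" using leq_antisym[OF j(1) bot_cl] leq_bot[OF j(1)] unfolding h_def by blast
    thus False using j leq_bot[OF y] by simp
  qed
  have "h \<in> H A"
    unfolding H_def using hj hm hb leq_top[OF j(1)] by (auto simp: h_def)
  moreover have "h x" "\<not> h y" unfolding h_def using x y j by auto
  ultimately show ?thesis by blast
qed

definition rep :: "'a \<Rightarrow> ('a \<Rightarrow> bool) set" where
  "rep x = {h \<in> H A. h x}"

lemma rep_sub: "rep x \<subseteq> H A" unfolding rep_def by blast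

lemma leq_rep: assumes x: "x \<in> car A" and y: "y \<in> car A" shows "leq A x y \<longleftrightarrow> rep x \<subseteq> rep y"
proof
  assume "leq A x y" thus "rep x \<subseteq> rep y" unfolding rep_def using H_mono[OF _ x y] by blast
next
  assume r: "rep x \<subseteq> rep y"
  show "leq A x y"
  proof (rule ccontr)
    assume "\<not> leq A x y"
    then obtain h where "h \<in> H A" "h x" "\<not> h y" using separation[OF x y] by blast
    thus False using r unfolding rep_def by blast
  qed
qed

lemma rep_inj: "x \<in> car A \<Longrightarrow> y \<in> car A \<Longrightarrow> rep x = rep y \<Longrightarrow> x = y"
  using leq_rep[of x y] leq_rep[of y x] leq_antisym[of x y] by simp

lemma rep_jn: "x \<in> car A \<Longrightarrow> y \<in> car A \<Longrightarrow> rep (jn A x y) = rep x \<union> rep y"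
  unfolding rep_def using H_jn by blast
lemma rep_mt: "x \<in> car A \<Longrightarrow> y \<in> car A \<Longrightarrow> rep (mt A x y) = rep x \<inter> rep y"
  unfolding rep_def using H_mt by blast
lemma rep_bot: "rep (bot A) = {}"
  unfolding rep_def using H_bot by blast
lemma rep_top: "rep (top A) = H A"
  unfolding rep_def using H_top by blast

lemma H_le_po: "po (H A) (H_le A)"
  unfolding po_def H_le_def
proof (intro conjI ballI impI)
  fix x y assume xy: "x \<in> H A" "y \<in> H A" "\<forall>xa\<in>car A. x xa \<longrightarrow> y xa" "\<forall>xa\<in>car A. y xa \<longrightarrow> x xa"
  show "x = y"
  proof
    fix a show "x a = y a" using xy H_out by (cases "a \<in> car A") blast+
  qed
qed auto

lemma rep_upcl: "x \<in> car A \<Longrightarrow> upcl (H A) (H_le A) (rep x)"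
  unfolding upcl_def rep_def H_le_def by blast

lemma gen: assumes h: "h \<in> H A" shows "\<exists>m\<in>car A. h m \<and> (\<forall>y\<in>car A. h y \<longrightarrow> leq A m y)"
proof -
  have "finite S \<Longrightarrow> S \<subseteq> {y\<in>car A. h y} \<Longrightarrow> \<exists>m\<in>car A. h m \<and> (\<forall>y\<in>S. leq A m y)" for S
  proof (induction S rule: finite_induct)
    case empty thus ?case using H_top[OF h] top_cl by blast
  next
    case (insert s S)
    have "S \<subseteq> {y\<in>car A. h y}" using insert.prems by blast
    from insert.IH[OF this] obtain m where m: "m \<in> car A" "h m" "\<forall>y\<in>S. leq A m y" by blast
    have s: "s \<in> car A" "h s" using insert.prems by auto
    have c: "mt A m s \<in> car A" using m s by simp
    have hm: "h (mt A m s)" using H_mt[OF h m(1) s(1)] m s by simp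
    have "\<forall>y\<in>insert s S. leq A (mt A m s) y"
    proof
      fix y assume y: "y \<in> insert s S"
      show "leq A (mt A m s) y"
      proof (cases "y = s")
        case True thus ?thesis using leq_mt2[OF m(1) s(1)] by simp
      next
        case False
        hence yS: "y \<in> S" using y by blast
        hence yc: "y \<in> car A" using insert.prems by blast
        show ?thesis using leq_trans[OF c m(1) yc leq_mt1[OF m(1) s(1)]] m(3) yS by blast
      qed
    qed
    thus ?case using c hm by blast
  qed
  from this[of "{y\<in>car A. h y}"] show ?thesis using fin by (simp, blast)
qed

lemma cogen: assumes h: "h \<in> H A" shows "\<exists>n\<in>car A. \<not> h n \<and> (\<forall>y\<in>car A. \<not> h y \<longrightarrow> leq A y n)"
proof -
  have "finite S \<Longrightarrow> S \<subseteq> {y\<in>car A. \<not> h y} \<Longrightarrow> \<exists>n\<in>car A. \<not> h n \<and> (\<forall>y\<in>S. leq A y n)" for S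
  proof (induction S rule: finite_induct)
    case empty thus ?case using H_bot[OF h] bot_cl by blast
  next
    case (insert s S)
    have "S \<subseteq> {y\<in>car A. \<not> h y}" using insert.prems by blast
    from insert.IH[OF this] obtain n where n: "n \<in> car A" "\<not> h n" "\<forall>y\<in>S. leq A y n" by blast
    have s: "s \<in> car A" "\<not> h s" using insert.prems by auto
    have c: "jn A n s \<in> car A" using n s by simp
    have hn: "\<not> h (jn A n s)" using H_jn[OF h n(1) s(1)] n s by simp
    have "\<forall>y\<in>insert s S. leq A y (jn A n s)"
    proof
      fix y assume y: "y \<in> insert s S"
      show "leq A y (jn A n s)"
      proof (cases "y = s")
        case True thus ?thesis using leq_jn2[OF n(1) s(1)] by simp
      next
        case False
        hence yS: "y \<in> S" using y by blast
        hence yc: "y \<in> car A" using insert.prems by blast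
        show ?thesis using leq_trans[OF yc n(1) c _ leq_jn1[OF n(1) s(1)]] n(3) yS by blast
      qed
    qed
    thus ?case using c hn by blast
  qed
  from this[of "{y\<in>car A. \<not> h y}"] show ?thesis using fin by (simp, blast)
qed

lemma rep_st: assumes x: "x \<in> car A" shows "rep (st A x) = H A - dn (H A) (H_le A) (rep x)"
proof
  have xx: "mt A x (st A x) = bot A" using st_ax[OF x st_cl[OF x]] leq_refl x by simp
  show "rep (st A x) \<subseteq> H A - dn (H A) (H_le A) (rep x)"
  proof
    fix h assume h: "h \<in> rep (st A x)"
    have "\<not> (g \<in> H A \<and> H_le A h g \<and> g x)" for g
    proof
      assume g: "g \<in> H A \<and> H_le A h g \<and> g x"
      hence "g (st A x)" using h x unfolding rep_def H_le_def by simp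
      hence "g (mt A x (st A x))" using g H_mt[of g x "st A x"] x by simp
      thus False using xx H_bot[of g] g by simp
    qed
    thus "h \<in> H A - dn (H A) (H_le A) (rep x)" using h unfolding rep_def dn_def by blast
  qed
  show "H A - dn (H A) (H_le A) (rep x) \<subseteq> rep (st A x)"
  proof
    fix h assume h: "h \<in> H A - dn (H A) (H_le A) (rep x)"
    have hH: "h \<in> H A" using h by blast
    show "h \<in> rep (st A x)"
    proof (rule ccontr)
      assume nh: "h \<notin> rep (st A x)"
      obtain m where m: "m \<in> car A" "h m" "\<forall>y\<in>car A. h y \<longrightarrow> leq A m y" using gen[OF hH] by blast
      have mx: "mt A m x \<in> car A" using m x by simp
      have "mt A m x \<noteq> bot A"
      proof
        assume "mt A m x = bot A"
        hence "mt A x m = bot A" using mt_comm m x by simp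
        hence "leq A m (st A x)" using st_ax[OF x m(1)] by simp
        hence "h (st A x)" using H_mono[OF hH m(1) st_cl[OF x]] m(2) by blast
        thus False using nh hH unfolding rep_def by blast
      qed
      hence "\<not> leq A (mt A m x) (bot A)" using leq_antisym[OF mx bot_cl] leq_bot[OF mx] by blast
      then obtain g where g: "g \<in> H A" "g (mt A m x)" "\<not> g (bot A)" using separation[OF mx bot_cl] by blast
      have gm: "g m" "g x" using g(2) H_mt[OF g(1) m(1) x] by auto
      have "H_le A h g" unfolding H_le_def
      proof (intro ballI impI)
        fix y assume y: "y \<in> car A" "h y"
        thus "g y" using H_mono[OF g(1) m(1) y(1)] m(3) gm(1) by blast
      qed
      hence "h \<in> dn (H A) (H_le A) (rep x)" using g gm hH unfolding dn_def rep_def by blast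
      thus False using h by blast
    qed
  qed
qed

lemma rep_pl: assumes x: "x \<in> car A" shows "rep (pl A x) = up (H A) (H_le A) (H A - rep x)"
proof
  have xx: "jn A x (pl A x) = top A" using pl_ax[OF x pl_cl[OF x]] leq_refl x by simp
  show "up (H A) (H_le A) (H A - rep x) \<subseteq> rep (pl A x)"
  proof
    fix h assume "h \<in> up (H A) (H_le A) (H A - rep x)"
    then obtain g where g: "g \<in> H A" "\<not> g x" "H_le A g h" "h \<in> H A" unfolding dn_def rep_def by blast
    have "g (jn A x (pl A x))" using xx H_top[OF g(1)] by simp
    hence "g (pl A x)" using H_jn[OF g(1) x pl_cl[OF x]] g(2) by simp
    thus "h \<in> rep (pl A x)" using g x unfolding H_le_def rep_def by simp
  qed
  show "rep (pl A x) \<subseteq> up (H A) (H_le A) (H A - rep x)"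
  proof
    fix h assume h: "h \<in> rep (pl A x)"
    hence hH: "h \<in> H A" and hp: "h (pl A x)" unfolding rep_def by blast+
    obtain n where n: "n \<in> car A" "\<not> h n" "\<forall>y\<in>car A. \<not> h y \<longrightarrow> leq A y n" using cogen[OF hH] by blast
    have nx: "jn A n x \<in> car A" using n x by simp
    have "jn A n x \<noteq> top A"
    proof
      assume "jn A n x = top A"
      hence "jn A x n = top A" using jn_comm n x by simp
      hence "leq A (pl A x) n" using pl_ax[OF x n(1)] by simp
      hence "h n" using H_mono[OF hH pl_cl[OF x] n(1)] hp by blast
      thus False using n by blast
    qed
    hence "\<not> leq A (top A) (jn A n x)" using leq_antisym[OF nx top_cl] leq_top[OF nx] by blast
    then obtain g where g: "g \<in> H A" "g (top A)" "\<not> g (jn A n x)" using separation[OF top_cl nx] by blast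
    have gn: "\<not> g n" "\<not> g x" using g(3) H_jn[OF g(1) n(1) x] by auto
    have "H_le A g h" unfolding H_le_def
    proof (intro ballI impI)
      fix y assume y: "y \<in> car A" "g y"
      show "h y"
      proof (rule ccontr)
        assume "\<not> h y" hence "leq A y n" using n(3) y(1) by blast
        hence "g n" using H_mono[OF g(1) y(1) n(1)] y(2) by blast
        thus False using gn by blast
      qed
    qed
    thus "h \<in> up (H A) (H_le A) (H A - rep x)" using g gn hH unfolding dn_def rep_def by blast
  qed
qed

lemma H_finite: "finite (H A)"
proof -
  have "H A \<subseteq> (\<lambda>S x. x \<in> S) ` Pow (car A)"
  proof
    fix h assume h: "h \<in> H A"
    have "h = (\<lambda>x. x \<in> {x\<in>car A. h x})" using H_out[OF h] by (auto simp: fun_eq_iff)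
    thus "h \<in> (\<lambda>S x. x \<in> S) ` Pow (car A)" by blast
  qed
  thus ?thesis using finite_subset fin by (meson finite_Pow_iff finite_imageI)
qed

lemma H_card: "card (H A) \<le> 2 ^ card (car A)"
proof -
  have "H A \<subseteq> (\<lambda>S x. x \<in> S) ` Pow (car A)"
  proof
    fix h assume h: "h \<in> H A"
    have "h = (\<lambda>x. x \<in> {x\<in>car A. h x})" using H_out[OF h] by (auto simp: fun_eq_iff)
    thus "h \<in> (\<lambda>S x. x \<in> S) ` Pow (car A)" by blast
  qed
  hence "card (H A) \<le> card ((\<lambda>S x. x \<in> S) ` Pow (car A))" using fin by (intro card_mono) auto
  also have "\<dots> \<le> card (Pow (car A))" by (rule card_image_le) (use fin in auto)
  also have "\<dots> = 2 ^ card (car A)" using fin by (simp add: card_Pow)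
  finally show ?thesis .
qed

lemma rep_surj: assumes U: "upcl (H A) (H_le A) U" shows "\<exists>x\<in>car A. rep x = U"
proof -
  have gen_up: "finite S \<Longrightarrow> S \<subseteq> H A \<Longrightarrow> \<exists>x\<in>car A. rep x = up (H A) (H_le A) S" for S
  proof (induction S rule: finite_induct)
    case empty thus ?case using rep_bot by (intro bexI[of _ "bot A"]) auto
  next
    case (insert s S)
    then obtain x where x: "x \<in> car A" "rep x = up (H A) (H_le A) S" by blast
    have s: "s \<in> H A" using insert by auto
    obtain m where m: "m \<in> car A" "s m" "\<forall>y\<in>car A. s y \<longrightarrow> leq A m y" using gen s by blast
    have rm: "rep m = up (H A) (H_le A) {s}"
    proof
      show "rep m \<subseteq> up (H A) (H_le A) {s}"
      proof
        fix g assume g: "g \<in> rep m"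
        have "H_le A s g" unfolding H_le_def using m g H_mono unfolding rep_def by blast
        thus "g \<in> up (H A) (H_le A) {s}" using g unfolding rep_def dn_def by blast
      qed
      show "up (H A) (H_le A) {s} \<subseteq> rep m"
        using m unfolding dn_def rep_def H_le_def by auto
    qed
    show ?case
      using x m rm rep_jn[OF x(1) m(1)] dn_Un[of "H A" _ "S" "{s}"]
      by (intro bexI[of _ "jn A x m"]) auto
  qed
  have UH: "U \<subseteq> H A" using U unfolding upcl_def by blast
  from gen_up[of U] obtain x where x: "x \<in> car A" "rep x = up (H A) (H_le A) U"
    using UH finite_subset[OF UH H_finite] by blast
  have "up (H A) (H_le A) U = U"
    using U H_le_po unfolding upcl_def dn_def po_def by blast
  thus ?thesis using x by auto
qed

end


lemma prod_jn: "jn (prod_alg B C) p q = (jn B (fst p) (fst q), jn C (snd p) (snd q))"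
  by (cases p; cases q) (simp add: prod_alg_def)
lemma prod_mt: "mt (prod_alg B C) p q = (mt B (fst p) (fst q), mt C (snd p) (snd q))"
  by (cases p; cases q) (simp add: prod_alg_def)
lemma prod_st: "st (prod_alg B C) p = (st B (fst p), st C (snd p))"
  by (cases p) (simp add: prod_alg_def)
lemma prod_pl: "pl (prod_alg B C) p = (pl B (fst p), pl C (snd p))"
  by (cases p) (simp add: prod_alg_def)
lemma prod_bot: "bot (prod_alg B C) = (bot B, bot C)" by (simp add: prod_alg_def)
lemma prod_top: "top (prod_alg B C) = (top B, top C)" by (simp add: prod_alg_def)
lemma prod_car: "car (prod_alg B C) = car B \<times> car C" by (simp add: prod_alg_def)

context fdda
begin

lemma homD:
  assumes "is_hom f A (prod_alg B C)"
  shows "\<And>x y. x \<in> car A \<Longrightarrow> y \<in> car A \<Longrightarrow> f (jn A x y) = (jn B (fst (f x)) (fst (f y)), jn C (snd (f x)) (snd (f y)))"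
    "\<And>x y. x \<in> car A \<Longrightarrow> y \<in> car A \<Longrightarrow> f (mt A x y) = (mt B (fst (f x)) (fst (f y)), mt C (snd (f x)) (snd (f y)))"
    "\<And>x. x \<in> car A \<Longrightarrow> f (st A x) = (st B (fst (f x)), st C (snd (f x)))"
    "\<And>x. x \<in> car A \<Longrightarrow> f (pl A x) = (pl B (fst (f x)), pl C (snd (f x)))"
    "f (bot A) = (bot B, bot C)" "f (top A) = (top B, top C)"
  using assms unfolding is_hom_def prod_jn prod_mt prod_st prod_pl prod_bot prod_top by simp_all


lemma teval_cl: "x \<in> car A \<Longrightarrow> y \<in> car A \<Longrightarrow> z \<in> car A \<Longrightarrow> teval A x y z t \<in> car A"
  by (induction t) auto

lemma congD:
  assumes "congruence A \<theta>"
  shows "\<theta> \<subseteq> car A \<times> car A" "\<And>x. x \<in> car A \<Longrightarrow> (x,x) \<in> \<theta>"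
    "\<And>x y. (x,y) \<in> \<theta> \<Longrightarrow> (y,x) \<in> \<theta>" "\<And>x y z. (x,y) \<in> \<theta> \<Longrightarrow> (y,z) \<in> \<theta> \<Longrightarrow> (x,z) \<in> \<theta>"
    "\<And>x x' y y'. (x,x') \<in> \<theta> \<Longrightarrow> (y,y') \<in> \<theta> \<Longrightarrow> (jn A x y, jn A x' y') \<in> \<theta>"
    "\<And>x x' y y'. (x,x') \<in> \<theta> \<Longrightarrow> (y,y') \<in> \<theta> \<Longrightarrow> (mt A x y, mt A x' y') \<in> \<theta>"
    "\<And>x x'. (x,x') \<in> \<theta> \<Longrightarrow> (st A x, st A x') \<in> \<theta>"
    "\<And>x x'. (x,x') \<in> \<theta> \<Longrightarrow> (pl A x, pl A x') \<in> \<theta>"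
  using assms unfolding congruence_def equiv_def refl_on_def sym_def trans_def by blast+

lemma congI:
  assumes "\<theta> \<subseteq> car A \<times> car A" "\<And>x. x \<in> car A \<Longrightarrow> (x,x) \<in> \<theta>"
    "\<And>x y. (x,y) \<in> \<theta> \<Longrightarrow> (y,x) \<in> \<theta>" "\<And>x y z. (x,y) \<in> \<theta> \<Longrightarrow> (y,z) \<in> \<theta> \<Longrightarrow> (x,z) \<in> \<theta>"
    "\<And>x x' y y'. (x,x') \<in> \<theta> \<Longrightarrow> (y,y') \<in> \<theta> \<Longrightarrow> (jn A x y, jn A x' y') \<in> \<theta>"
    "\<And>x x' y y'. (x,x') \<in> \<theta> \<Longrightarrow> (y,y') \<in> \<theta> \<Longrightarrow> (mt A x y, mt A x' y') \<in> \<theta>"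
    "\<And>x x'. (x,x') \<in> \<theta> \<Longrightarrow> (st A x, st A x') \<in> \<theta>"
    "\<And>x x'. (x,x') \<in> \<theta> \<Longrightarrow> (pl A x, pl A x') \<in> \<theta>"
  shows "congruence A \<theta>"
  unfolding congruence_def equiv_def refl_on_def sym_def trans_def
  apply (intro conjI allI impI ballI)
  apply (rule assms(1))
  apply (erule assms(2))
  apply (erule assms(3))
  apply (erule assms(4), assumption)
  apply (erule assms(5), assumption)
  apply (erule assms(6), assumption)
  apply (erule assms(7))
  apply (erule assms(8))
  done

lemma teval_cong:
  assumes c: "congruence A \<theta>" and xyz: "(x,x') \<in> \<theta>" "(y,y') \<in> \<theta>" "(z,z') \<in> \<theta>"
  shows "(teval A x y z t, teval A x' y' z' t) \<in> \<theta>"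
proof (induction t)
  case TBot thus ?case using congD(2)[OF c bot_cl] by simp
next
  case TTop thus ?case using congD(2)[OF c top_cl] by simp
next
  case VX thus ?case using xyz by simp
next
  case VY thus ?case using xyz by simp
next
  case VZ thus ?case using xyz by simp
next
  case (TJn s u) thus ?case using congD(5)[OF c] by simp
next
  case (TMt s u) thus ?case using congD(6)[OF c] by simp
next
  case (TSt s) thus ?case using congD(7)[OF c] by simp
next
  case (TPl s) thus ?case using congD(8)[OF c] by simp
qed

lemma discr_simple: assumes t: "is_discr_term t A" shows "simple A"
proof -
  have "congruence A \<theta> \<longleftrightarrow> \<theta> = Id_on (car A) \<or> \<theta> = car A \<times> car A" for \<theta>
  proof
    assume c: "congruence A \<theta>"
    show "\<theta> = Id_on (car A) \<or> \<theta> = car A \<times> car A"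
    proof (cases "\<exists>a b. (a,b) \<in> \<theta> \<and> a \<noteq> b")
      case False
      hence "\<theta> = Id_on (car A)" using congD(1,2)[OF c] by (auto simp: Id_on_def)
      thus ?thesis by blast
    next
      case True
      then obtain a b where ab: "(a,b) \<in> \<theta>" "a \<noteq> b" by blast
      have abc: "a \<in> car A" "b \<in> car A" using ab congD(1)[OF c] by auto
      have za: "(z, a) \<in> \<theta>" if z: "z \<in> car A" for z
      proof -
        have aa: "(a,a) \<in> \<theta>" using congD(2)[OF c abc(1)] .
        have zz: "(z,z) \<in> \<theta>" using congD(2)[OF c z] .
        have "(teval A a a z t, teval A a b z t) \<in> \<theta>" using teval_cong[OF c aa ab(1) zz] .
        moreover have "teval A a a z t = z" using t abc z unfolding is_discr_term_def discr_def by simp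
        moreover have "teval A a b z t = a" using t abc z ab(2) unfolding is_discr_term_def discr_def by simp
        ultimately show ?thesis by simp
      qed
      have "car A \<times> car A \<subseteq> \<theta>"
      proof
        fix p assume "p \<in> car A \<times> car A"
        then obtain u v where p: "p = (u,v)" "u \<in> car A" "v \<in> car A" by blast
        have "(u,a) \<in> \<theta>" "(a,v) \<in> \<theta>" using za p congD(3)[OF c] by blast+
        thus "p \<in> \<theta>" using congD(4)[OF c] p by blast
      qed
      thus ?thesis using congD(1)[OF c] by blast
    qed
  next
    assume "\<theta> = Id_on (car A) \<or> \<theta> = car A \<times> car A"
    thus "congruence A \<theta>"
    proof
      assume th: "\<theta> = Id_on (car A)"
      show ?thesis by (rule congI) (auto simp: th Id_on_def)
    next
      assume th: "\<theta> = car A \<times> car A"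
      show ?thesis by (rule congI) (auto simp: th)
    qed
  qed
  thus ?thesis unfolding simple_def by blast
qed

lemma simple_di: assumes s: "simple A" shows "directly_indecomposable A"
  unfolding directly_indecomposable_def
proof
  assume "\<exists>B C. \<exists>f :: 'a \<Rightarrow> 'a \<times> 'a. alg_closed B \<and> alg_closed C \<and> nontrivial B \<and> nontrivial C \<and>
            is_iso f A (prod_alg B C)"
  then obtain B C and f :: "'a \<Rightarrow> 'a \<times> 'a" where B: "alg_closed B" "nontrivial B" and C: "alg_closed C" "nontrivial C"
    and iso: "is_iso f A (prod_alg B C)" by blast
  have hom: "is_hom f A (prod_alg B C)" and bij: "bij_betw f (car A) (car B \<times> car C)"
    using iso unfolding is_iso_def by (auto simp: prod_car)
  have img: "f ` car A = car B \<times> car C" using bij unfolding bij_betw_def by blast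
  define \<theta> where "\<theta> = {(x,y). x \<in> car A \<and> y \<in> car A \<and> fst (f x) = fst (f y)}"
  note hj = homD(1)[OF hom] and hm = homD(2)[OF hom] and hs = homD(3,4)[OF hom]
  have "congruence A \<theta>"
  proof (rule congI)
    show "\<theta> \<subseteq> car A \<times> car A" unfolding \<theta>_def by blast
  next
    fix x x' y y' assume "(x,x') \<in> \<theta>" "(y,y') \<in> \<theta>"
    thus "(jn A x y, jn A x' y') \<in> \<theta>" "(mt A x y, mt A x' y') \<in> \<theta>"
      unfolding \<theta>_def using hj hm by auto
  next
    fix x x' assume "(x,x') \<in> \<theta>"
    thus "(st A x, st A x') \<in> \<theta>" "(pl A x, pl A x') \<in> \<theta>"
      unfolding \<theta>_def using hs by auto
  qed (auto simp: \<theta>_def)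
  hence th: "\<theta> = Id_on (car A) \<or> \<theta> = car A \<times> car A" using s unfolding simple_def by blast
  obtain b1 b2 where b: "b1 \<in> car B" "b2 \<in> car B" "b1 \<noteq> b2" using B unfolding nontrivial_def by blast
  obtain c1 c2 where c: "c1 \<in> car C" "c2 \<in> car C" "c1 \<noteq> c2" using C unfolding nontrivial_def by blast
  have pre: "\<exists>x\<in>car A. f x = (b,c)" if "b \<in> car B" "c \<in> car C" for b c
  proof -
    have "(b,c) \<in> f ` car A" using img that by simp
    thus ?thesis by (simp add: image_iff eq_commute)
  qed
  obtain x1 where x1: "x1 \<in> car A" "f x1 = (b1,c1)" using pre[OF b(1) c(1)] by blast
  obtain x2 where x2: "x2 \<in> car A" "f x2 = (b1,c2)" using pre[OF b(1) c(2)] by blast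
  obtain x3 where x3: "x3 \<in> car A" "f x3 = (b2,c1)" using pre[OF b(2) c(1)] by blast
  have "(x1,x2) \<in> \<theta>" "x1 \<noteq> x2" using x1 x2 c unfolding \<theta>_def by auto
  hence "\<theta> \<noteq> Id_on (car A)" by (auto simp: Id_on_def)
  moreover have "(x1,x3) \<notin> \<theta>" using x1 x3 b unfolding \<theta>_def by auto
  hence "\<theta> \<noteq> car A \<times> car A" using x1 x3 by blast
  ultimately show False using th by blast
qed

end


definition maxmin :: "'a dpa \<Rightarrow> bool" where
  "maxmin A \<longleftrightarrow> (\<forall>x\<in>H A. is_maximal (H A) (H_le A) x \<or> is_minimal (H A) (H_le A) x)"

lemma not_maxmin:
  assumes "\<not> maxmin A"
  shows "\<exists>h\<in>H A. (\<exists>g\<in>H A. H_le A h g \<and> g \<noteq> h) \<and> (\<exists>g\<in>H A. H_le A g h \<and> g \<noteq> h)"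
  using assms unfolding maxmin_def is_maximal_def is_minimal_def by blast

context fdda
begin

lemma agree_st:
  assumes x: "x \<in> car A" and y: "y \<in> car A" and eq: "rep x - {h} = rep y - {h}"
    and h: "h \<in> H A" and g: "g \<in> H A" "H_le A h g" "g \<noteq> h"
  shows "st A x = st A y"
proof -
  have "dn (H A) (H_le A) (rep x) = dn (H A) (H_le A) (rep y)"
    by (rule G1g[OF H_le_po rep_upcl[OF x] rep_upcl[OF y] eq g h])
  hence "rep (st A x) = rep (st A y)" using rep_st[OF x] rep_st[OF y] by simp
  thus ?thesis using rep_inj[OF st_cl[OF x] st_cl[OF y]] by blast
qed

lemma agree_pl:
  assumes x: "x \<in> car A" and y: "y \<in> car A" and eq: "rep x - {h} = rep y - {h}"
    and h: "h \<in> H A" and g: "g \<in> H A" "H_le A g h" "g \<noteq> h"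
  shows "pl A x = pl A y"
proof -
  have eq': "(H A - rep x) - {h} = (H A - rep y) - {h}" using eq by blast
  have "up (H A) (H_le A) (H A - rep x) = up (H A) (H_le A) (H A - rep y)"
    by (rule G1g[OF po_dual[OF H_le_po] compl_upcl[OF rep_upcl[OF x]] compl_upcl[OF rep_upcl[OF y]] eq' g(1) _ g(3) h])
       (use g(2) in simp)
  hence "rep (pl A x) = rep (pl A y)" using rep_pl[OF x] rep_pl[OF y] by simp
  thus ?thesis using rep_inj[OF pl_cl[OF x] pl_cl[OF y]] by blast
qed

lemma up_upcl: "S \<subseteq> H A \<Longrightarrow> upcl (H A) (H_le A) (up (H A) (H_le A) S)"
  using dn_downcl[OF po_dual[OF H_le_po]] by simp

lemma pair:
  assumes h: "h \<in> H A"
  shows "\<exists>a\<in>car A. \<exists>b\<in>car A. a \<noteq> b \<and> rep a - {h} = rep b - {h}"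
proof -
  define U1 where "U1 = up (H A) (H_le A) {h}"
  define U2 where "U2 = U1 - {h}"
  have u1: "upcl (H A) (H_le A) U1" unfolding U1_def using up_upcl h by simp
  have hU1: "h \<in> U1" unfolding U1_def dn_def using H_le_po h unfolding po_def by blast
  have u2: "upcl (H A) (H_le A) U2"
    unfolding upcl_def
  proof (intro conjI ballI impI)
    show "U2 \<subseteq> H A" using u1 unfolding U2_def upcl_def by blast
  next
    fix s g assume s: "s \<in> U2" and g: "g \<in> H A" "H_le A s g"
    have "g \<in> U1" using u1 s g unfolding U2_def upcl_def by blast
    moreover have "g \<noteq> h"
    proof
      assume gh: "g = h"
      have "s \<in> H A" "H_le A h s" using s unfolding U2_def U1_def dn_def by auto
      hence "s = h" using g gh H_le_po h unfolding po_def by blast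
      thus False using s unfolding U2_def by blast
    qed
    ultimately show "g \<in> U2" unfolding U2_def by blast
  qed
  obtain a where a: "a \<in> car A" "rep a = U1" using rep_surj[OF u1] by blast
  obtain b where b: "b \<in> car A" "rep b = U2" using rep_surj[OF u2] by blast
  have "a \<noteq> b" using a b hU1 unfolding U2_def by blast
  moreover have "rep a - {h} = rep b - {h}" using a b unfolding U2_def by blast
  ultimately show ?thesis using a b by blast
qed

lemma reg_mm: assumes r: "regular A" shows "maxmin A"
proof (rule ccontr)
  assume "\<not> maxmin A"
  then obtain h g1 g0 where h: "h \<in> H A" and g1: "g1 \<in> H A" "H_le A h g1" "g1 \<noteq> h"
    and g0: "g0 \<in> H A" "H_le A g0 h" "g0 \<noteq> h"
    using not_maxmin by blast
  obtain a b where ab: "a \<in> car A" "b \<in> car A" "a \<noteq> b" "rep a - {h} = rep b - {h}" using pair[OF h] by blast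
  have "st A a = st A b" using agree_st[OF ab(1,2,4) h g1] .
  moreover have "pl A a = pl A b" using agree_pl[OF ab(1,2,4) h g0] .
  ultimately show False using r ab unfolding regular_def by blast
qed

lemma simple_mm: assumes s: "simple A" shows "maxmin A"
proof (rule ccontr)
  assume "\<not> maxmin A"
  then obtain h g1 g0 where h: "h \<in> H A" and g1: "g1 \<in> H A" "H_le A h g1" "g1 \<noteq> h"
    and g0: "g0 \<in> H A" "H_le A g0 h" "g0 \<noteq> h"
    using not_maxmin by blast
  define \<theta> where "\<theta> = {(x,y). x \<in> car A \<and> y \<in> car A \<and> rep x - {h} = rep y - {h}}"
  have c: "congruence A \<theta>"
  proof (rule congI)
    show "\<theta> \<subseteq> car A \<times> car A" unfolding \<theta>_def by blast
  next
    fix x x' y y' assume xy: "(x,x') \<in> \<theta>" "(y,y') \<in> \<theta>"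
    hence cc: "x \<in> car A" "x' \<in> car A" "y \<in> car A" "y' \<in> car A"
      and e: "rep x - {h} = rep x' - {h}" "rep y - {h} = rep y' - {h}" unfolding \<theta>_def by auto
    have "rep (jn A x y) - {h} = rep (jn A x' y') - {h}" using e rep_jn cc by auto
    thus "(jn A x y, jn A x' y') \<in> \<theta>" unfolding \<theta>_def using cc by simp
    have "rep (mt A x y) - {h} = rep (mt A x' y') - {h}" using e rep_mt cc by auto
    thus "(mt A x y, mt A x' y') \<in> \<theta>" unfolding \<theta>_def using cc by simp
  next
    fix x x' assume "(x,x') \<in> \<theta>"
    hence cc: "x \<in> car A" "x' \<in> car A" and e: "rep x - {h} = rep x' - {h}" unfolding \<theta>_def by auto
    show "(st A x, st A x') \<in> \<theta>" using agree_st[OF cc e h g1] cc unfolding \<theta>_def by simp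
    show "(pl A x, pl A x') \<in> \<theta>" using agree_pl[OF cc e h g0] cc unfolding \<theta>_def by simp
  qed (auto simp: \<theta>_def)
  hence th: "\<theta> = Id_on (car A) \<or> \<theta> = car A \<times> car A" using s unfolding simple_def by blast
  obtain a b where ab: "a \<in> car A" "b \<in> car A" "a \<noteq> b" "rep a - {h} = rep b - {h}" using pair[OF h] by blast
  have "(a,b) \<in> \<theta>" using ab unfolding \<theta>_def by simp
  hence "\<theta> \<noteq> Id_on (car A)" using ab(3) by (auto simp: Id_on_def)
  moreover have "(bot A, top A) \<notin> \<theta>"
  proof
    assume "(bot A, top A) \<in> \<theta>"
    hence "rep (bot A) - {h} = rep (top A) - {h}" unfolding \<theta>_def by simp
    hence "H A - {h} = {}" using rep_bot rep_top by simp
    thus False using g1 by blast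
  qed
  hence "\<theta> \<noteq> car A \<times> car A" by auto
  ultimately show False using th by blast
qed

lemma mm_reg: assumes m: "maxmin A" shows "regular A"
  unfolding regular_def
proof (intro ballI impI)
  fix a b assume ab: "a \<in> car A" "b \<in> car A" and e: "st A a = st A b \<and> pl A a = pl A b"
  have d: "dn (H A) (H_le A) (rep a) = dn (H A) (H_le A) (rep b)"
  proof -
    have "H A - dn (H A) (H_le A) (rep a) = H A - dn (H A) (H_le A) (rep b)"
      using rep_st[OF ab(1)] rep_st[OF ab(2)] e by simp
    thus ?thesis using dn_sub[of "H A" "H_le A"] by blast
  qed
  have u: "up (H A) (H_le A) (H A - rep a) = up (H A) (H_le A) (H A - rep b)"
    using rep_pl[OF ab(1)] rep_pl[OF ab(2)] e by simp
  have refl: "H_le A h h" for h unfolding H_le_def by blast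
  have key: "h \<in> rep a \<longleftrightarrow> h \<in> rep b" if hH: "h \<in> H A" for h
  proof (cases "is_maximal (H A) (H_le A) h")
    case True
    have mx: "\<And>g. g \<in> H A \<Longrightarrow> H_le A h g \<Longrightarrow> g = h" using True unfolding is_maximal_def by blast
    have *: "h \<in> rep x \<longleftrightarrow> h \<in> dn (H A) (H_le A) (rep x)" for x
    proof
      assume "h \<in> rep x" thus "h \<in> dn (H A) (H_le A) (rep x)" using hH refl[of h] unfolding dn_def by blast
    next
      assume "h \<in> dn (H A) (H_le A) (rep x)"
      then obtain g where g: "g \<in> rep x" "H_le A h g" unfolding dn_def by blast
      have "g \<in> H A" using g(1) unfolding rep_def by blast
      hence "g = h" using mx g(2) by blast
      thus "h \<in> rep x" using g by simp
    qed
    show ?thesis using *[of a] *[of b] d by simp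
  next
    case False
    hence mi: "is_minimal (H A) (H_le A) h" using m hH unfolding maxmin_def by blast
    have mn: "\<And>g. g \<in> H A \<Longrightarrow> H_le A g h \<Longrightarrow> g = h" using mi unfolding is_minimal_def by blast
    have *: "h \<notin> rep x \<longleftrightarrow> h \<in> up (H A) (H_le A) (H A - rep x)" for x
    proof
      assume "h \<notin> rep x" thus "h \<in> up (H A) (H_le A) (H A - rep x)" using hH refl[of h] unfolding dn_def by blast
    next
      assume "h \<in> up (H A) (H_le A) (H A - rep x)"
      then obtain g where g: "g \<in> H A" "g \<notin> rep x" "H_le A g h" unfolding dn_def by blast
      hence "g = h" using mn by blast
      thus "h \<notin> rep x" using g by simp
    qed
    show ?thesis using *[of a] *[of b] u by blast
  qed
  have "rep a = rep b"
  proof (rule set_eqI)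
    fix h show "h \<in> rep a \<longleftrightarrow> h \<in> rep b"
    proof (cases "h \<in> H A")
      case True thus ?thesis using key by blast
    next
      case False thus ?thesis unfolding rep_def by blast
    qed
  qed
  thus "a = b" using rep_inj[OF ab] by blast
qed

end


lemma stE: "upcl X le E \<Longrightarrow> S \<subseteq> X \<Longrightarrow> (X - dn X le S) \<inter> E = (X - dn X le (S \<inter> E)) \<inter> E"
  unfolding dn_def upcl_def by blast

lemma plE: "upcl X (\<lambda>a b. le b a) E \<Longrightarrow> (up X le (X - S)) \<inter> E = (up X le (X - S \<inter> E)) \<inter> E"
  unfolding dn_def upcl_def by blast

lemma disconn:
  assumes "\<not> poset_connected X le"
  shows "\<exists>E. upcl X le E \<and> upcl X (\<lambda>a b. le b a) E \<and> E \<noteq> {} \<and> E \<noteq> X"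
proof -
  define R where "R = {(u,v). u \<in> X \<and> v \<in> X \<and> (le u v \<or> le v u)}"
  obtain x y where xy: "x \<in> X" "y \<in> X" "(x,y) \<notin> R\<^sup>*" using assms unfolding poset_connected_def R_def by blast
  define E where "E = {v. (x,v) \<in> R\<^sup>*}"
  have EX: "E \<subseteq> X"
  proof
    fix v assume "v \<in> E" hence "(x,v) \<in> R\<^sup>*" unfolding E_def by blast
    thus "v \<in> X"
    proof (induction rule: rtrancl_induct)
      case base thus ?case using xy by blast
    next
      case (step u w) thus ?case unfolding R_def by blast
    qed
  qed
  have "upcl X le E" unfolding upcl_def
  proof (intro conjI ballI impI)
    fix s g assume s: "s \<in> E" "g \<in> X" "le s g"
    have "(s,g) \<in> R" using s EX unfolding R_def by blast
    thus "g \<in> E" using s(1) unfolding E_def by (simp add: rtrancl_into_rtrancl)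
  qed (rule EX)
  moreover have "upcl X (\<lambda>a b. le b a) E" unfolding upcl_def
  proof (intro conjI ballI impI)
    fix s g assume s: "s \<in> E" "g \<in> X" "le g s"
    have "(s,g) \<in> R" using s EX unfolding R_def by blast
    thus "g \<in> E" using s(1) unfolding E_def by (simp add: rtrancl_into_rtrancl)
  qed (rule EX)
  moreover have "x \<in> E" unfolding E_def by simp
  moreover have "y \<notin> E" using xy unfolding E_def by simp
  ultimately show ?thesis using xy by blast
qed

context fdda
begin

lemma split_not_di:
  assumes E1: "upcl (H A) (H_le A) E" and E2: "upcl (H A) (\<lambda>a b. H_le A b a) E"
    and En: "E \<noteq> {}" and EH: "E \<noteq> H A"
  shows "\<not> directly_indecomposable A"
proof -
  define E' where "E' = H A - E"
  have E'1: "upcl (H A) (H_le A) E'" unfolding E'_def using compl_upcl[OF E2] by simp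
  have E'2: "upcl (H A) (\<lambda>a b. H_le A b a) E'" unfolding E'_def using compl_upcl[OF E1] by simp
  obtain e where e: "e \<in> car A" "rep e = E" using rep_surj[OF E1] by blast
  obtain e' where e': "e' \<in> car A" "rep e' = E'" using rep_surj[OF E'1] by blast
  have EsH: "E \<subseteq> H A" using E1 unfolding upcl_def by blast
  define part :: "'a \<Rightarrow> 'a dpa" where "part u = \<lparr> car = {x\<in>car A. leq A x u}, jn = jn A, mt = mt A,
      st = (\<lambda>x. mt A (st A x) u), pl = (\<lambda>x. mt A (pl A x) u), bot = bot A, top = u \<rparr>" for u
  have pc: "x \<in> car (part u) \<longleftrightarrow> x \<in> car A \<and> rep x \<subseteq> rep u" if u: "u \<in> car A" for x u
    unfolding part_def using leq_rep[OF _ u] by auto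
  have ps: "jn (part u) = jn A" "mt (part u) = mt A" "st (part u) = (\<lambda>x. mt A (st A x) u)"
    "pl (part u) = (\<lambda>x. mt A (pl A x) u)" "bot (part u) = bot A" "top (part u) = u" for u
    unfolding part_def by simp_all
  have pcl: "alg_closed (part u)" if u: "u \<in> car A" for u
    unfolding alg_closed_def ps
  proof (intro conjI ballI)
    fix x y assume "x \<in> car (part u)" "y \<in> car (part u)"
    hence xy: "x \<in> car A" "y \<in> car A" "rep x \<subseteq> rep u" "rep y \<subseteq> rep u" using pc[OF u] by auto
    show "jn A x y \<in> car (part u)" using pc[OF u] xy rep_jn[OF xy(1,2)] by simp
    show "mt A x y \<in> car (part u)" using pc[OF u] xy rep_mt[OF xy(1,2)] by auto
  next
    fix x assume "x \<in> car (part u)"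
    hence x: "x \<in> car A" using pc[OF u] by auto
    show "mt A (st A x) u \<in> car (part u)" using pc[OF u] x u rep_mt[OF st_cl[OF x] u] by auto
    show "mt A (pl A x) u \<in> car (part u)" using pc[OF u] x u rep_mt[OF pl_cl[OF x] u] by auto
  next
    show "bot A \<in> car (part u)" using pc[OF u] rep_bot by simp
    show "u \<in> car (part u)" using pc[OF u] u by simp
  qed
  have pnt: "nontrivial (part u)" if u: "u \<in> car A" "rep u \<noteq> {}" for u
  proof -
    have "bot A \<in> car (part u)" "u \<in> car (part u)" using pc[OF u(1)] u rep_bot by auto
    moreover have "bot A \<noteq> u" using u rep_bot by auto
    ultimately show ?thesis unfolding nontrivial_def by blast
  qed
  define f where "f x = (mt A x e, mt A x e')" for x
  have rme: "rep (mt A x e) = rep x \<inter> E" "rep (mt A x e') = rep x \<inter> E'" if "x \<in> car A" for x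
    using rep_mt that e e' by auto
  have fin_im: "f x \<in> car (part e) \<times> car (part e')" if x: "x \<in> car A" for x
    unfolding f_def using pc[OF e(1)] pc[OF e'(1)] rme[OF x] x e e' by auto
  have hom: "is_hom f A (prod_alg (part e) (part e'))"
    unfolding is_hom_def prod_jn prod_mt prod_st prod_pl prod_bot prod_top prod_car ps
  proof (intro conjI ballI)
    show "f ` car A \<subseteq> car (part e) \<times> car (part e')" using fin_im by blast
  next
    fix x y assume xy: "x \<in> car A" "y \<in> car A"
    have "rep (mt A (jn A x y) u) = rep (jn A (mt A x u) (mt A y u))" if u: "u \<in> car A" for u
      using rep_jn rep_mt xy u by auto
    hence "mt A (jn A x y) u = jn A (mt A x u) (mt A y u)" if u: "u \<in> car A" for u
      using rep_inj xy u that by simp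
    thus "f (jn A x y) = (jn A (fst (f x)) (fst (f y)), jn A (snd (f x)) (snd (f y)))"
      unfolding f_def using e e' by simp
    have "rep (mt A (mt A x y) u) = rep (mt A (mt A x u) (mt A y u))" if u: "u \<in> car A" for u
      using rep_mt xy u by auto
    hence "mt A (mt A x y) u = mt A (mt A x u) (mt A y u)" if u: "u \<in> car A" for u
      using rep_inj xy u that by simp
    thus "f (mt A x y) = (mt A (fst (f x)) (fst (f y)), mt A (snd (f x)) (snd (f y)))"
      unfolding f_def using e e' by simp
  next
    fix x assume x: "x \<in> car A"
    have st1: "mt A (st A x) u = mt A (st A (mt A x u)) u" if u: "u \<in> car A" "upcl (H A) (H_le A) (rep u)" for u
    proof -
      have "rep (mt A (st A x) u) = (H A - dn (H A) (H_le A) (rep x)) \<inter> rep u"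
        using rep_mt rep_st x u by simp
      also have "\<dots> = (H A - dn (H A) (H_le A) (rep x \<inter> rep u)) \<inter> rep u" by (rule stE[OF u(2) rep_sub])
      also have "\<dots> = rep (mt A (st A (mt A x u)) u)" using rep_mt rep_st x u by simp
      finally show ?thesis using rep_inj x u by simp
    qed
    have pl1: "mt A (pl A x) u = mt A (pl A (mt A x u)) u" if u: "u \<in> car A" "upcl (H A) (\<lambda>a b. H_le A b a) (rep u)" for u
    proof -
      have "rep (mt A (pl A x) u) = up (H A) (H_le A) (H A - rep x) \<inter> rep u"
        using rep_mt rep_pl x u by simp
      also have "\<dots> = up (H A) (H_le A) (H A - rep x \<inter> rep u) \<inter> rep u" by (rule plE[OF u(2)])
      also have "\<dots> = rep (mt A (pl A (mt A x u)) u)" using rep_mt rep_pl x u by simp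
      finally show ?thesis using rep_inj x u by simp
    qed
    show "f (st A x) = (mt A (st A (fst (f x))) e, mt A (st A (snd (f x))) e')"
      unfolding f_def using st1[of e] st1[of e'] e e' E1 E'1 by simp
    show "f (pl A x) = (mt A (pl A (fst (f x))) e, mt A (pl A (snd (f x))) e')"
      unfolding f_def using pl1[of e] pl1[of e'] e e' E2 E'2 by simp
  next
    have "rep (mt A (bot A) e) = rep (bot A)" "rep (mt A (bot A) e') = rep (bot A)"
      using rme[OF bot_cl] rep_bot by auto
    thus "f (bot A) = (bot A, bot A)" unfolding f_def using rep_inj e e' by simp
    have "rep (mt A (top A) e) = rep e" "rep (mt A (top A) e') = rep e'"
      using rme[OF top_cl] rep_top e e' EsH unfolding E'_def by auto
    thus "f (top A) = (e, e')" unfolding f_def using rep_inj e e' by simp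
  qed
  have inj: "inj_on f (car A)"
  proof (rule inj_onI)
    fix x y assume xy: "x \<in> car A" "y \<in> car A" "f x = f y"
    hence "rep (mt A x e) = rep (mt A y e)" "rep (mt A x e') = rep (mt A y e')" unfolding f_def by auto
    hence "rep x \<inter> E = rep y \<inter> E" "rep x \<inter> E' = rep y \<inter> E'" using rme xy by auto
    hence "rep x = rep y" using rep_sub[of x] rep_sub[of y] unfolding E'_def by blast
    thus "x = y" using rep_inj xy by blast
  qed
  have surj: "car (part e) \<times> car (part e') \<subseteq> f ` car A"
  proof
    fix p assume "p \<in> car (part e) \<times> car (part e')"
    then obtain b c where p: "p = (b,c)" "b \<in> car A" "rep b \<subseteq> E" "c \<in> car A" "rep c \<subseteq> E'"
      using pc[OF e(1)] pc[OF e'(1)] e e' by auto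
    have "rep (mt A (jn A b c) e) = rep b" "rep (mt A (jn A b c) e') = rep c"
      using rme rep_jn p unfolding E'_def by auto
    hence "mt A (jn A b c) e = b" "mt A (jn A b c) e' = c"
      using rep_inj[OF mt_cl[OF jn_cl[OF p(2) p(4)] e(1)] p(2)] rep_inj[OF mt_cl[OF jn_cl[OF p(2) p(4)] e'(1)] p(4)] by auto
    hence "f (jn A b c) = p" unfolding f_def using p by simp
    thus "p \<in> f ` car A" using jn_cl[OF p(2) p(4)] by (metis imageI)
  qed
  have "is_iso f A (prod_alg (part e) (part e'))"
    unfolding is_iso_def bij_betw_def prod_car using hom inj surj fin_im by blast
  moreover have "nontrivial (part e)" "nontrivial (part e')"
    using pnt e e' En EH EsH unfolding E'_def by auto
  ultimately show ?thesis unfolding directly_indecomposable_def using pcl e e' by blast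
qed

lemma di_conn: assumes d: "directly_indecomposable A" shows "poset_connected (H A) (H_le A)"
  using disconn[of "H A" "H_le A"] split_not_di d by blast

end


context fdda
begin

lemma mt_bot_r: "x \<in> car A \<Longrightarrow> mt A x (bot A) = bot A"
  using rep_inj[OF mt_cl[OF _ bot_cl] bot_cl] rep_mt[OF _ bot_cl] rep_bot by simp

lemma st_top: "st A (top A) = bot A"
proof -
  have "H A \<subseteq> dn (H A) (H_le A) (H A)" by (rule dn_grow[OF H_le_po subset_refl])
  hence "rep (st A (top A)) = rep (bot A)" using rep_st[OF top_cl] rep_top rep_bot by auto
  thus ?thesis using rep_inj[OF st_cl[OF top_cl] bot_cl] by blast
qed

lemma st_bot: "st A (bot A) = top A"
proof -
  have "rep (st A (bot A)) = rep (top A)" using rep_st[OF bot_cl] rep_top rep_bot by simp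
  thus ?thesis using rep_inj[OF st_cl[OF bot_cl] top_cl] by blast
qed

lemma conn_di: assumes c: "poset_connected (H A) (H_le A)" shows "directly_indecomposable A"
  unfolding directly_indecomposable_def
proof
  assume "\<exists>B C. \<exists>f :: 'a \<Rightarrow> 'a \<times> 'a. alg_closed B \<and> alg_closed C \<and> nontrivial B \<and> nontrivial C \<and>
            is_iso f A (prod_alg B C)"
  then obtain B C and f :: "'a \<Rightarrow> 'a \<times> 'a" where B: "alg_closed B" "nontrivial B" and C: "alg_closed C" "nontrivial C"
    and iso: "is_iso f A (prod_alg B C)" by blast
  have hom: "is_hom f A (prod_alg B C)" and bij: "bij_betw f (car A) (car B \<times> car C)"
    using iso unfolding is_iso_def by (auto simp: prod_car)
  have img: "f ` car A = car B \<times> car C" and inj: "inj_on f (car A)" using bij unfolding bij_betw_def by blast+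
  note hj = homD(1)[OF hom] and hm = homD(2)[OF hom] and hs = homD(3)[OF hom]
    and hb = homD(5)[OF hom] and ht = homD(6)[OF hom]
  have pre: "\<exists>x\<in>car A. f x = (b,c)" if "b \<in> car B" "c \<in> car C" for b c
  proof -
    have "(b,c) \<in> f ` car A" using img that by simp
    thus ?thesis by (simp add: image_iff eq_commute)
  qed
  have Bc: "top B \<in> car B" "bot B \<in> car B" using B unfolding alg_closed_def by auto
  have Cc: "top C \<in> car C" "bot C \<in> car C" using C unfolding alg_closed_def by auto
  have fx: "f x \<in> car B \<times> car C" if "x \<in> car A" for x using img that by blast
  have tbB: "top B \<noteq> bot B"
  proof
    assume eq: "top B = bot B"
    have z: "b = bot B" if b: "b \<in> car B" for b
    proof -
      obtain x where x: "x \<in> car A" "f x = (b, bot C)" using pre[OF b Cc(2)] by blast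
      have "f (mt A x (top A)) = (mt B b (top B), mt C (bot C) (top C))" using hm[OF x(1) top_cl] x ht by simp
      hence 1: "b = mt B b (top B)" using mt_top[OF x(1)] x by simp
      have "f (mt A x (bot A)) = (mt B b (bot B), mt C (bot C) (bot C))" using hm[OF x(1) bot_cl] x hb by simp
      hence 2: "bot B = mt B b (bot B)" using mt_bot_r[OF x(1)] hb by simp
      show ?thesis using 1 2 eq by simp
    qed
    obtain b1 b2 where "b1 \<in> car B" "b2 \<in> car B" "b1 \<noteq> b2" using B unfolding nontrivial_def by blast
    thus False using z by blast
  qed
  have tbC: "top C \<noteq> bot C"
  proof
    assume eq: "top C = bot C"
    have z: "c = bot C" if c: "c \<in> car C" for c
    proof -
      obtain x where x: "x \<in> car A" "f x = (bot B, c)" using pre[OF Bc(2) c] by blast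
      have "f (mt A x (top A)) = (mt B (bot B) (top B), mt C c (top C))" using hm[OF x(1) top_cl] x ht by simp
      hence 1: "c = mt C c (top C)" using mt_top[OF x(1)] x by simp
      have "f (mt A x (bot A)) = (mt B (bot B) (bot B), mt C c (bot C))" using hm[OF x(1) bot_cl] x hb by simp
      hence 2: "bot C = mt C c (bot C)" using mt_bot_r[OF x(1)] hb by simp
      show ?thesis using 1 2 eq by simp
    qed
    obtain c1 c2 where "c1 \<in> car C" "c2 \<in> car C" "c1 \<noteq> c2" using C unfolding nontrivial_def by blast
    thus False using z by blast
  qed
  obtain e where e: "e \<in> car A" "f e = (top B, bot C)" using pre[OF Bc(1) Cc(2)] by blast
  obtain e' where e': "e' \<in> car A" "f e' = (bot B, top C)" using pre[OF Bc(2) Cc(1)] by blast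
  have s1: "st B (top B) = bot B" "st C (top C) = bot C"
    using hs[OF top_cl] ht hb st_top by simp_all
  have s2: "st B (bot B) = top B" "st C (bot C) = top C"
    using hs[OF bot_cl] ht hb st_bot by simp_all
  have "f (st A e) = f e'" using hs[OF e(1)] e e' s1 s2 by simp
  hence ste: "st A e = e'" by (rule inj_onD[OF inj _ st_cl[OF e(1)] e'(1)])
  have m1: "mt B (top B) (bot B) = bot B" "mt C (top C) (bot C) = bot C"
    using hm[OF top_cl bot_cl] ht hb mt_bot_r[OF top_cl] by simp_all
  have m2: "mt B (bot B) (top B) = bot B" "mt C (bot C) (top C) = bot C"
    using hm[OF bot_cl top_cl] ht hb mt_top[OF bot_cl] by simp_all
  have "f (mt A e e') = f (bot A)" using hm[OF e(1) e'(1)] e e' m1 m2 hb by simp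
  hence mee: "mt A e e' = bot A" by (rule inj_onD[OF inj _ mt_cl[OF e(1) e'(1)] bot_cl])
  have j1: "jn B (top B) (bot B) = top B" "jn C (top C) (bot C) = top C"
    using hj[OF top_cl bot_cl] ht hb jn_bot[OF top_cl] by simp_all
  have j2: "jn B (bot B) (top B) = top B" "jn C (bot C) (top C) = top C"
    using hj[OF bot_cl top_cl] ht hb jn_bot[OF top_cl] jn_comm[OF bot_cl top_cl] by simp_all
  have "f (jn A e e') = f (top A)" using hj[OF e(1) e'(1)] e e' j1 j2 ht by simp
  hence jee: "jn A e e' = top A" by (rule inj_onD[OF inj _ jn_cl[OF e(1) e'(1)] top_cl])
  define E where "E = rep e"
  have r1: "E \<inter> rep e' = {}" using rep_mt[OF e(1) e'(1)] mee rep_bot unfolding E_def by simp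
  have r2: "E \<union> rep e' = H A" using rep_jn[OF e(1) e'(1)] jee rep_top unfolding E_def by simp
  have r3: "rep e' = H A - dn (H A) (H_le A) E" using rep_st[OF e(1)] ste unfolding E_def by simp
  have EH: "E \<subseteq> H A" unfolding E_def by (rule rep_sub)
  have dE: "dn (H A) (H_le A) E \<subseteq> E"
  proof
    fix k assume k: "k \<in> dn (H A) (H_le A) E"
    hence "k \<in> H A" using dn_sub[of "H A" "H_le A" E] by blast
    moreover have "k \<notin> rep e'" using r3 k by blast
    ultimately show "k \<in> E" using r2 by blast
  qed
  have cl1: "\<forall>a\<in>E. \<forall>g\<in>H A. H_le A a g \<longrightarrow> g \<in> E" using rep_upcl[OF e(1)] unfolding E_def upcl_def by blast
  have cl2: "\<forall>a\<in>E. \<forall>g\<in>H A. H_le A g a \<longrightarrow> g \<in> E"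
  proof (intro ballI impI)
    fix a g assume "a \<in> E" "g \<in> H A" "H_le A g a"
    hence "g \<in> dn (H A) (H_le A) E" unfolding dn_def by blast
    thus "g \<in> E" using dE by blast
  qed
  have "e \<noteq> bot A"
  proof
    assume "e = bot A" hence "f e = f (bot A)" by simp
    thus False using e(2) hb tbB by simp
  qed
  hence "E \<noteq> {}" using rep_inj[OF e(1) bot_cl] rep_bot unfolding E_def by metis
  then obtain k where k: "k \<in> E" by blast
  have "E = H A" using conn_closed[OF c EH k cl1 cl2] .
  hence "e = top A" using rep_inj[OF e(1) top_cl] rep_top unfolding E_def by simp
  hence "f e = f (top A)" by simp
  thus False using e(2) ht tbC by simp
qed

end


definition ta :: tterm where "ta = TJn (TMt (TSt VX) (TSt (TSt VY))) (TMt (TSt VY) (TSt (TSt VX)))"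
definition tb :: tterm where "tb = TMt (TJn (TPl VX) (TPl (TPl VY))) (TJn (TPl VY) (TPl (TPl VX)))"
definition tw :: tterm where "tw = TMt (TSt ta) tb"
definition tu :: "nat \<Rightarrow> tterm" where "tu n = ((\<lambda>t. TSt (TPl t)) ^^ n) tw"
definition DT :: "nat \<Rightarrow> tterm" where "DT n = TJn (TMt VZ (tu n)) (TMt VX (TSt (tu n)))"

lemma ud_sub: "K \<subseteq> X \<Longrightarrow> (ud X le ^^ n) K \<subseteq> X"
  by (induction n) (auto simp: ud_def dn_def)

context fdda
begin

lemma L_a:
  assumes x: "x \<in> car A" and y: "y \<in> car A"
  shows "rep (teval A x y z ta) = {} \<longleftrightarrow> st A x = st A y"
proof -
  define P where "P = dn (H A) (H_le A) (rep x)"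
  define Q where "Q = dn (H A) (H_le A) (rep y)"
  have PH: "P \<subseteq> H A" "Q \<subseteq> H A" unfolding P_def Q_def by (rule dn_sub)+
  have rx: "rep (st A x) = H A - P" "rep (st A y) = H A - Q" unfolding P_def Q_def using rep_st x y by auto
  have rxx: "rep (st A (st A x)) = H A - dn (H A) (H_le A) (H A - P)"
    "rep (st A (st A y)) = H A - dn (H A) (H_le A) (H A - Q)"
    using rep_st[OF st_cl[OF x]] rep_st[OF st_cl[OF y]] rx by auto
  have ev: "rep (teval A x y z ta) = ((H A - P) \<inter> (H A - dn (H A) (H_le A) (H A - Q)))
       \<union> ((H A - Q) \<inter> (H A - dn (H A) (H_le A) (H A - P)))"
    unfolding ta_def using rep_jn rep_mt rx rxx x y by simp
  have Pd: "upcl (H A) (\<lambda>a b. H_le A b a) P" "upcl (H A) (\<lambda>a b. H_le A b a) Q"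
    unfolding P_def Q_def by (rule dn_downcl[OF H_le_po rep_sub])+
  have f1: "((H A - P) \<inter> (H A - dn (H A) (H_le A) (H A - Q)) = {}) \<longleftrightarrow> Q \<subseteq> P"
    using F1g[OF H_le_po rep_upcl[OF y] Pd(1)] unfolding Q_def .
  have f2: "((H A - Q) \<inter> (H A - dn (H A) (H_le A) (H A - P)) = {}) \<longleftrightarrow> P \<subseteq> Q"
    using F1g[OF H_le_po rep_upcl[OF x] Pd(2)] unfolding P_def .
  have "rep (teval A x y z ta) = {} \<longleftrightarrow> P = Q" using ev f1 f2 by blast
  also have "\<dots> \<longleftrightarrow> rep (st A x) = rep (st A y)" using rx PH by blast
  also have "\<dots> \<longleftrightarrow> st A x = st A y" using rep_inj[OF st_cl[OF x] st_cl[OF y]] by auto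
  finally show ?thesis .
qed

lemma L_b:
  assumes x: "x \<in> car A" and y: "y \<in> car A"
  shows "rep (teval A x y z tb) = H A \<longleftrightarrow> pl A x = pl A y"
proof -
  define R where "R = up (H A) (H_le A) (H A - rep x)"
  define S where "S = up (H A) (H_le A) (H A - rep y)"
  have RH: "R \<subseteq> H A" "S \<subseteq> H A" unfolding R_def S_def by (rule dn_sub)+
  have rx: "rep (pl A x) = R" "rep (pl A y) = S" unfolding R_def S_def using rep_pl x y by auto
  have rxx: "rep (pl A (pl A x)) = up (H A) (H_le A) (H A - R)"
    "rep (pl A (pl A y)) = up (H A) (H_le A) (H A - S)"
    using rep_pl[OF pl_cl[OF x]] rep_pl[OF pl_cl[OF y]] rx by auto
  have U: "up (H A) (H_le A) (H A - R) \<subseteq> H A" "up (H A) (H_le A) (H A - S) \<subseteq> H A" by (rule dn_sub)+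
  have ev: "rep (teval A x y z tb) = (R \<union> up (H A) (H_le A) (H A - S)) \<inter> (S \<union> up (H A) (H_le A) (H A - R))"
    unfolding tb_def using rep_jn rep_mt rx rxx x y by simp
  have Ru: "upcl (H A) (H_le A) R" "upcl (H A) (H_le A) S"
    unfolding R_def S_def using dn_downcl[OF po_dual[OF H_le_po], of "H A - rep x"]
      dn_downcl[OF po_dual[OF H_le_po], of "H A - rep y"] by auto
  have f1: "((H A - R) \<inter> (H A - up (H A) (H_le A) (H A - S)) = {}) \<longleftrightarrow> S \<subseteq> R"
    using F1g[OF po_dual[OF H_le_po] compl_upcl[OF rep_upcl[OF y]]] Ru(1) unfolding S_def by simp
  have f2: "((H A - S) \<inter> (H A - up (H A) (H_le A) (H A - R)) = {}) \<longleftrightarrow> R \<subseteq> S"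
    using F1g[OF po_dual[OF H_le_po] compl_upcl[OF rep_upcl[OF x]]] Ru(2) unfolding R_def by simp
  have "rep (teval A x y z tb) = H A \<longleftrightarrow> R = S" using ev f1 f2 RH U by blast
  also have "\<dots> \<longleftrightarrow> pl A x = pl A y" using rep_inj[OF pl_cl[OF x] pl_cl[OF y]] rx by auto
  finally show ?thesis .
qed

lemma L_w:
  assumes x: "x \<in> car A" and y: "y \<in> car A" and m: "maxmin A"
  shows "rep (teval A x y z tw) = H A \<longleftrightarrow> x = y"
proof -
  have ca: "teval A x y z ta \<in> car A" "teval A x y z tb \<in> car A" unfolding ta_def tb_def using x y by simp_all
  have ev: "rep (teval A x y z tw) = (H A - dn (H A) (H_le A) (rep (teval A x y z ta))) \<inter> rep (teval A x y z tb)"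
    unfolding tw_def using rep_mt rep_st ca by simp
  have d0: "dn (H A) (H_le A) (rep (teval A x y z ta)) = {} \<longleftrightarrow> rep (teval A x y z ta) = {}"
    using dn_grow[OF H_le_po rep_sub, of "teval A x y z ta"] by auto
  have "rep (teval A x y z tw) = H A \<longleftrightarrow>
      rep (teval A x y z ta) = {} \<and> rep (teval A x y z tb) = H A"
    using ev d0 dn_sub[of "H A" "H_le A" "rep (teval A x y z ta)"] rep_sub[of "teval A x y z tb"] by blast
  also have "\<dots> \<longleftrightarrow> st A x = st A y \<and> pl A x = pl A y" using L_a[OF x y] L_b[OF x y] by simp
  also have "\<dots> \<longleftrightarrow> x = y" using mm_reg[OF m] x y unfolding regular_def by blast
  finally show ?thesis .
qed

lemma L_u:
  assumes x: "x \<in> car A" and y: "y \<in> car A" and z: "z \<in> car A"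
  shows "teval A x y z (tu n) \<in> car A \<and>
    rep (teval A x y z (tu n)) = H A - (ud (H A) (H_le A) ^^ n) (H A - rep (teval A x y z tw))"
proof (induction n)
  case 0
  have "teval A x y z tw \<in> car A" using teval_cl x y z by blast
  thus ?case unfolding tu_def using rep_sub by auto
next
  case (Suc n)
  define u where "u = teval A x y z (tu n)"
  define K where "K = (ud (H A) (H_le A) ^^ n) (H A - rep (teval A x y z tw))"
  have KH: "K \<subseteq> H A" unfolding K_def by (rule ud_sub) blast
  have u: "u \<in> car A" "rep u = H A - K" using Suc unfolding u_def K_def by auto
  have e: "teval A x y z (tu (Suc n)) = st A (pl A u)" unfolding u_def tu_def by simp
  have "rep (st A (pl A u)) = H A - dn (H A) (H_le A) (up (H A) (H_le A) (H A - rep u))"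
    using rep_st[OF pl_cl[OF u(1)]] rep_pl[OF u(1)] by simp
  also have "H A - rep u = K" using u KH by blast
  finally have "rep (st A (pl A u)) = H A - ud (H A) (H_le A) K" unfolding ud_def .
  thus ?case using e u unfolding K_def by simp
qed

lemma mm_discr:
  assumes m: "maxmin A" and c: "poset_connected (H A) (H_le A)" and n: "card (H A) \<le> n"
  shows "is_discr_term (DT n) A"
  unfolding is_discr_term_def
proof (intro ballI)
  fix x y z assume x: "x \<in> car A" and y: "y \<in> car A" and z: "z \<in> car A"
  define u where "u = teval A x y z (tu n)"
  have U: "u \<in> car A" "rep u = H A - (ud (H A) (H_le A) ^^ n) (H A - rep (teval A x y z tw))"
    using L_u[OF x y z] unfolding u_def by auto
  have ev: "teval A x y z (DT n) = jn A (mt A z u) (mt A x (st A u))" unfolding DT_def u_def by simp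
  show "teval A x y z (DT n) = discr x y z"
  proof (cases "x = y")
    case True
    hence "rep (teval A x y z tw) = H A" using L_w[OF x y m] by simp
    hence "rep u = H A" using U ud_empty[where X="H A" and le="H_le A" and n=n] by simp
    hence ut: "u = top A" using rep_inj[OF U(1) top_cl] rep_top by simp
    have "rep (jn A (mt A z u) (mt A x (st A u))) = rep z"
    proof -
      have "H A \<subseteq> dn (H A) (H_le A) (H A)" by (rule dn_grow[OF H_le_po subset_refl])
      thus ?thesis using rep_jn rep_mt rep_st rep_top ut x z rep_sub[of z] by auto
    qed
    hence "jn A (mt A z u) (mt A x (st A u)) = z" using rep_inj x z U(1) by simp
    thus ?thesis using ev True unfolding discr_def by simp
  next
    case False
    hence ne: "rep (teval A x y z tw) \<noteq> H A" using L_w[OF x y m] by simp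
    have "H A - rep (teval A x y z tw) \<noteq> {}" using ne rep_sub by blast
    hence "(ud (H A) (H_le A) ^^ n) (H A - rep (teval A x y z tw)) = H A"
      using ud_full[OF H_le_po c H_finite _ _ n] by blast
    hence "rep u = {}" using U by simp
    hence ub: "u = bot A" using rep_inj[OF U(1) bot_cl] rep_bot by simp
    have "rep (jn A (mt A z u) (mt A x (st A u))) = rep x"
      using rep_jn rep_mt rep_st rep_bot ub x z rep_sub[of x] by auto
    hence "jn A (mt A z u) (mt A x (st A u)) = x" using rep_inj x z U(1) by simp
    thus ?thesis using ev False unfolding discr_def by simp
  qed
qed

end


theorem theorem4p1:
  fixes \<B> :: "'a dpa set"
  assumes "finite \<B>"
    and "\<forall>A\<in>\<B>. ddp_algebra A \<and> finite (car A)"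
  shows "(((\<forall>A\<in>\<B>. quasi_primal A) \<and> (\<exists>t. \<forall>A\<in>\<B>. is_discr_term t A))
           \<longleftrightarrow> (\<forall>A\<in>\<B>. simple A))
       \<and> ((\<forall>A\<in>\<B>. simple A)
           \<longleftrightarrow> (\<forall>A\<in>\<B>. directly_indecomposable A \<and> regular A))
       \<and> ((\<forall>A\<in>\<B>. directly_indecomposable A \<and> regular A)
           \<longleftrightarrow> (\<forall>X\<in>{(H A, H_le A) | A. A \<in> \<B>}.
                  poset_connected (fst X) (snd X) \<and>
                  (\<forall>x\<in>fst X. is_maximal (fst X) (snd X) x \<or> is_minimal (fst X) (snd X) x)))"
proof -
  have loc: "fdda A" if "A \<in> \<B>" for A using assms(2) that unfolding fdda_def by blast
  define N where "N = (\<Sum>A\<in>\<B>. (2::nat) ^ card (car A))"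
  have cN: "card (H A) \<le> N" if A: "A \<in> \<B>" for A
  proof -
    have "card (H A) \<le> 2 ^ card (car A)" by (rule fdda.H_card[OF loc[OF A]])
    also have "\<dots> \<le> N" unfolding N_def by (rule member_le_sum[OF A _ assms(1)]) simp
    finally show ?thesis .
  qed
  define CM where "CM A \<longleftrightarrow> poset_connected (H A) (H_le A) \<and> maxmin A" for A :: "'a dpa"
  have s_cm: "CM A" if A: "A \<in> \<B>" and s: "simple A" for A
    using fdda.di_conn[OF loc[OF A] fdda.simple_di[OF loc[OF A] s]] fdda.simple_mm[OF loc[OF A] s]
    unfolding CM_def by blast
  have d_cm: "CM A \<longleftrightarrow> directly_indecomposable A \<and> regular A" if A: "A \<in> \<B>" for A
    using fdda.di_conn[OF loc[OF A]] fdda.reg_mm[OF loc[OF A]] fdda.conn_di[OF loc[OF A]] fdda.mm_reg[OF loc[OF A]]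
    unfolding CM_def by blast
  have cm_d: "is_discr_term (DT N) A" if A: "A \<in> \<B>" and c: "CM A" for A
    using fdda.mm_discr[OF loc[OF A] _ _ cN[OF A]] c unfolding CM_def by blast
  have cm_s: "simple A" if A: "A \<in> \<B>" and c: "CM A" for A
    using fdda.discr_simple[OF loc[OF A] cm_d[OF A c]] .
  have s_iff: "simple A \<longleftrightarrow> CM A" if A: "A \<in> \<B>" for A using s_cm[OF A] cm_s[OF A] by blast
  have P1: "((\<forall>A\<in>\<B>. quasi_primal A) \<and> (\<exists>t. \<forall>A\<in>\<B>. is_discr_term t A)) \<longleftrightarrow> (\<forall>A\<in>\<B>. simple A)"
  proof
    assume "(\<forall>A\<in>\<B>. quasi_primal A) \<and> (\<exists>t. \<forall>A\<in>\<B>. is_discr_term t A)"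
    then obtain t where t: "\<forall>A\<in>\<B>. is_discr_term t A" by blast
    show "\<forall>A\<in>\<B>. simple A" using t fdda.discr_simple[OF loc] by blast
  next
    assume s: "\<forall>A\<in>\<B>. simple A"
    have d: "\<forall>A\<in>\<B>. is_discr_term (DT N) A" using s s_iff cm_d by blast
    have "\<forall>A\<in>\<B>. quasi_primal A" unfolding quasi_primal_def using d assms(2) by blast
    thus "(\<forall>A\<in>\<B>. quasi_primal A) \<and> (\<exists>t. \<forall>A\<in>\<B>. is_discr_term t A)" using d by blast
  qed
  have P2: "(\<forall>A\<in>\<B>. simple A) \<longleftrightarrow> (\<forall>A\<in>\<B>. directly_indecomposable A \<and> regular A)"
    using s_iff d_cm by blast
  have P3: "(\<forall>A\<in>\<B>. directly_indecomposable A \<and> regular A) \<longleftrightarrow> (\<forall>A\<in>\<B>. CM A)"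
    using d_cm by blast
  have P4: "(\<forall>X\<in>{(H A, H_le A) | A. A \<in> \<B>}.
                  poset_connected (fst X) (snd X) \<and>
                  (\<forall>x\<in>fst X. is_maximal (fst X) (snd X) x \<or> is_minimal (fst X) (snd X) x))
       \<longleftrightarrow> (\<forall>A\<in>\<B>. CM A)"
    unfolding CM_def maxmin_def by auto
  show ?thesis using P1 P2 P3 P4 by blast
qed


end
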